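(* For integers $a,b\ge0$ and $1\le r\le a+b$, $D_{2r+1}\big(\zeta^{\mathfrak f}(\{2\}^a,3,\{2\}^b)\big)=\pi_{2r+1}\big(\alpha(\xi^r_{a,b})\big)\otimes\zeta^{\mathfrak f}(\{2\}^{a+b+1-r})$, where $\xi^r_{a,b}=\sum_{\substack{0\le\alpha'\le a,\ 0\le\beta\le b\\ \alpha'+\beta+1=r}}\zeta^{\mathfrak f}(\{2\}^{\alpha'},3,\{2\}^\beta)-\sum_{\substack{0\le\alpha'<a,\ 0\le\beta\le b\\ \alpha'+\beta+1=r}}\zeta^{\mathfrak f}(\{2\}^\beta,3,\{2\}^{\alpha'})+2\big(\mathbb 1(a\ge r)-\mathbb 1(b\ge r)\big)\sum_{i=1}^r(-1)^i\zeta^{\mathfrak f}(2i+1)\zeta^{\mathfrak f}(\{2\}^{r-i})$, and $\mathbb 1(P)$ is $1$ if $P$ holds and $0$ otherwise.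
   Context: Formal MZVs: $\mathcal X=\{x_0,x_1\}$, $\mathbb Q\langle\mathcal X\rangle$ free noncommutative polynomials (weight = number of letters), $ш$ shuffle product. $\mathcal Z^{\mathfrak f}=(\mathbb Q\langle\mathcal X\rangle,ш)/R$, $R$ the ideal generated by $x_0,x_1$ and $uш v-\iota(\iota^{-1}(u)*\iota^{-1}(v))$ for $u\in\mathbb Q\mathbf1+x_0\mathbb Q\langle\mathcal X\rangle x_1$, $v\in\mathbb Q\mathbf1+\mathbb Q\langle\mathcal X\rangle x_1$, with $\iota(y_{k_1}\cdots y_{k_d})=x_0^{k_1-1}x_1\cdots x_0^{k_d-1}x_1$ and $*$ the stuffle product ($y_iu*y_jv=y_i(u*y_jv)+y_j(y_iu*v)+y_{i+j}(u*v)$). $\zeta^{\mathfrak f}(k_1,\dots,k_d)$ is the class of $x_0^{k_1-1}x_1\cdots x_0^{k_d-1}x_1$; $\{2\}^m$ is $m$ entries $2$, $\zeta^{\mathfrak f}(\{2\}^0)=1$. $\mathcal A^{\mathfrak f}=\mathcal Z^{\mathfrak f}/(\zeta^{\mathfrak f}(2))$, $\alpha$ the projection; Goncharov coaction $\Delta_{\mathrm{Gon}}:\mathcal Z^{\mathfrak f}\to\mathcal A^{\mathfrak f}\otimes\mathcal Z^{\mathfrak f}$, $\zeta^{\mathfrak f}(w)\mapsto(\alpha\circ\zeta^{\mathfrak f}\otimes\zeta^{\mathfrak f})(\Delta_{\mathrm{Gon}}(w))$, where $\Delta_{\mathrm{Gon}}(\varepsilon_1\cdots\varepsilon_n)=\sum_k\sum_{0<i_1<\dots<i_k<n+1}\big(\mathop{ш}_{p=0}^kI(\varepsilon_{i_p};\varepsilon_{i_p+1}\cdots\varepsilon_{i_{p+1}-1};\varepsilon_{i_{p+1}})\big)\otimes\varepsilon_{i_1}\cdots\varepsilon_{i_k}$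 ($i_0=0,i_{k+1}=n+1,\varepsilon_0=x_1,\varepsilon_{n+1}=x_0$; $I(x_1;f;x_0)=f$, $I(x_0;f;x_1)=S(f)$, $S(\varepsilon_1\cdots\varepsilon_m)=(-1)^m\varepsilon_m\cdots\varepsilon_1$, $I(\varepsilon;f;\varepsilon)$ = coefficient of $\mathbf1$ in $f$ times $\mathbf1$). $\mathcal L^{\mathfrak f}=\mathcal A^{\mathfrak f}_{>0}/(\mathcal A^{\mathfrak f}_{>0})^2$, $\pi_{2r+1}:\mathcal A^{\mathfrak f}_{>0}\to\mathcal L^{\mathfrak f}_{2r+1}$ the projection, and $D_{2r+1}=(\pi_{2r+1}\otimes\mathrm{id})\circ(\Delta_{\mathrm{Gon}}-\mathbf1\otimes\mathrm{id}):\mathcal Z^{\mathfrak f}\to\mathcal L^{\mathfrak f}_{2r+1}\otimes\mathcal Z^{\mathfrak f}$. *)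

theory Defs
  imports Complex_Main
begin

datatype letter = X0 | X1

instance letter :: finite
proof
  have "(UNIV :: letter set) = {X0, X1}" using letter.exhaust by auto
  then show "finite (UNIV :: letter set)" by (metis finite.emptyI finite_insert)
qed

type_synonym word = "letter list"
(* an element of Q<X> is a finitely supported function word => rat *)
type_synonym poly = "word \<Rightarrow> rat"
(* an element of Q<X> (x) Q<X> is a finitely supported function on pairs of words *)
type_synonym tpoly = "word \<times> word \<Rightarrow> rat"

definition fsupp :: "('a \<Rightarrow> rat) \<Rightarrow> bool" where
  "fsupp p \<longleftrightarrow> finite {w. p w \<noteq> 0}"

definition dl :: "'a \<Rightarrow> ('a \<Rightarrow> rat)" where
  "dl u = (\<lambda>w. if w = u then 1 else 0)"

definition pre :: "'a \<Rightarrow> ('a list \<Rightarrow> rat) \<Rightarrow> ('a list \<Rightarrow> rat)" where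
  "pre a p = (\<lambda>w. case w of [] \<Rightarrow> 0 | c # w' \<Rightarrow> if c = a then p w' else 0)"

definition wcomp :: "nat \<Rightarrow> poly \<Rightarrow> poly" where
  "wcomp n p = (\<lambda>w. if length w = n then p w else 0)"

fun sh :: "word \<Rightarrow> word \<Rightarrow> poly" where
  "sh [] v = dl v"
| "sh u [] = dl u"
| "sh (a # u) (b # v) = (\<lambda>w. pre a (sh u (b # v)) w + pre b (sh (a # u) v) w)"

definition shmul :: "poly \<Rightarrow> poly \<Rightarrow> poly" where
  "shmul p q = (\<lambda>w. \<Sum>(u, v) \<in> {(u, v). length u + length v = length w}.
                      p u * q v * sh u v w)"

definition shprod_list :: "poly list \<Rightarrow> poly" where
  "shprod_list ps = foldr shmul ps (dl [])"

fun st :: "nat list \<Rightarrow> nat list \<Rightarrow> (nat list \<Rightarrow> rat)" where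
  "st [] v = dl v"
| "st u [] = dl u"
| "st (i # u) (j # v) =
     (\<lambda>m. pre i (st u (j # v)) m + pre j (st (i # u) v) m + pre (i + j) (st u v) m)"

definition pos :: "nat list \<Rightarrow> bool" where
  "pos k \<longleftrightarrow> (\<forall>x \<in> set k. 0 < x)"

definition stmul :: "(nat list \<Rightarrow> rat) \<Rightarrow> (nat list \<Rightarrow> rat) \<Rightarrow> (nat list \<Rightarrow> rat)" where
  "stmul P Q = (\<lambda>m. \<Sum>(k, l) \<in> {(k, l). sum_list k + sum_list l = sum_list m \<and> pos k \<and> pos l}.
                      P k * Q l * st k l m)"

(* iota(y_{k1}...y_{kd}) = x0^{k1-1} x1 ... x0^{kd-1} x1 ; also the word of zeta^f(k1,...,kd) *)
definition zw :: "nat list \<Rightarrow> word" where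
  "zw ks = concat (map (\<lambda>k. replicate (k - 1) X0 @ [X1]) ks)"

definition iota_poly :: "(nat list \<Rightarrow> rat) \<Rightarrow> poly" where
  "iota_poly S = (\<lambda>w. \<Sum>m \<in> {m. pos m \<and> zw m = w}. S m)"

definition iota_inv :: "poly \<Rightarrow> (nat list \<Rightarrow> rat)" where
  "iota_inv u = (\<lambda>k. if pos k then u (zw k) else 0)"

inductive_set qspan :: "('a \<Rightarrow> rat) set \<Rightarrow> ('a \<Rightarrow> rat) set" for S where
  zero: "(\<lambda>_. 0) \<in> qspan S"
| base: "f \<in> S \<Longrightarrow> f \<in> qspan S"
| add: "f \<in> qspan S \<Longrightarrow> g \<in> qspan S \<Longrightarrow> (\<lambda>x. f x + g x) \<in> qspan S"
| smul: "f \<in> qspan S \<Longrightarrow> (\<lambda>x. c * f x) \<in> qspan S"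

inductive_set shideal :: "poly set \<Rightarrow> poly set" for G where
  gen: "g \<in> G \<Longrightarrow> g \<in> shideal G"
| zero: "(\<lambda>_. 0) \<in> shideal G"
| add: "f \<in> shideal G \<Longrightarrow> g \<in> shideal G \<Longrightarrow> (\<lambda>x. f x + g x) \<in> shideal G"
| smul: "f \<in> shideal G \<Longrightarrow> (\<lambda>x. c * f x) \<in> shideal G"
| mult: "f \<in> shideal G \<Longrightarrow> fsupp q \<Longrightarrow> shmul q f \<in> shideal G"

definition Rgens :: "poly set" where
  "Rgens = {dl [X0], dl [X1]} \<union>
     {(\<lambda>w. shmul u v w - iota_poly (stmul (iota_inv u) (iota_inv v)) w) | u v.
        fsupp u \<and> fsupp v \<and>
        (\<forall>w. u w \<noteq> 0 \<longrightarrow> w = [] \<or> (\<exists>m. w = X0 # m @ [X1])) \<and>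
        (\<forall>w. v w \<noteq> 0 \<longrightarrow> w = [] \<or> (\<exists>m. w = m @ [X1]))}"

(* the ideal R:  Z^f = Q<X>/R *)
definition Rid :: "poly set" where
  "Rid = shideal Rgens"

(* kernel of Q<X> -> A^f = Z^f/(zeta^f(2)), zeta^f(2) = class of x0 x1 *)
definition RAid :: "poly set" where
  "RAid = shideal (Rgens \<union> {dl [X0, X1]})"

(* kernel of Q<X>_{>0} -> L^f = A_{>0}/(A_{>0})^2 *)
definition Lker :: "poly set" where
  "Lker = {(\<lambda>w. a w + s w) | a s. a \<in> RAid \<and>
            s \<in> qspan {shmul p q | p q. fsupp p \<and> fsupp q \<and> p [] = 0 \<and> q [] = 0}}"

(* kernel of  p |-> pi_{2r+1}(alpha(zeta^f(p)))  (pi_n = projection to the weight-n component) *)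
definition piker :: "nat \<Rightarrow> poly set" where
  "piker n = {p. fsupp p \<and> wcomp n p \<in> Lker}"

definition tens :: "poly \<Rightarrow> poly \<Rightarrow> tpoly" where
  "tens p q = (\<lambda>(u, v). p u * q v)"

(* kernel of  Q<X> (x) Q<X> -> L^f_n (x) Z^f *)
definition tker :: "nat \<Rightarrow> tpoly set" where
  "tker n = qspan ({tens p q | p q. p \<in> piker n \<and> fsupp q} \<union>
                   {tens p q | p q. fsupp p \<and> q \<in> Rid})"

(* equality in L^f_n (x) Z^f of the classes of two lifts *)
definition eqLZ :: "nat \<Rightarrow> tpoly \<Rightarrow> tpoly \<Rightarrow> bool" where
  "eqLZ n P Q \<longleftrightarrow> (\<lambda>x. P x - Q x) \<in> tker n"

definition Iseg :: "letter \<Rightarrow> word \<Rightarrow> letter \<Rightarrow> poly" where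
  "Iseg a f b =
    (if a = X1 \<and> b = X0 then dl f
     else if a = X0 \<and> b = X1 then (\<lambda>w. (-1) ^ length f * dl (rev f) w)
     else if f = [] then dl [] else (\<lambda>_. 0))"

definition gon_left :: "word \<Rightarrow> nat set \<Rightarrow> poly" where
  "gon_left w T =
    (let e = X1 # w @ [X0]; ks = sorted_list_of_set T; bs = 0 # ks @ [length w + 1]
     in shprod_list (map (\<lambda>(i, j). Iseg (e ! i) (take (j - i - 1) (drop (i + 1) e)) (e ! j))
                        (zip bs (tl bs))))"

definition gon_right :: "word \<Rightarrow> nat set \<Rightarrow> word" where
  "gon_right w T = map (\<lambda>i. (X1 # w @ [X0]) ! i) (sorted_list_of_set T)"

(* Delta_Gon(w) as an element of Q<X> (x) Q<X> *)
definition gon :: "word \<Rightarrow> tpoly" where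
  "gon w = (\<lambda>(u, v). \<Sum>T \<in> Pow {1..length w}.
              gon_left w T u * (if v = gon_right w T then 1 else 0))"

(* lift of (Delta_Gon - 1 (x) id)(w); D_{2r+1} is obtained by projecting with pi_{2r+1}, see eqLZ *)
definition gon_red :: "word \<Rightarrow> tpoly" where
  "gon_red w = (\<lambda>x. gon w x - tens (dl []) (dl w) x)"

definition twos :: "nat \<Rightarrow> nat list" where
  "twos m = replicate m 2"

definition xi :: "nat \<Rightarrow> nat \<Rightarrow> nat \<Rightarrow> poly" where
  "xi a b r = (\<lambda>w.
      (\<Sum>(al, be) \<in> {(al, be). al \<le> a \<and> be \<le> b \<and> al + be + 1 = r}.
          dl (zw (twos al @ [3] @ twos be)) w)
    - (\<Sum>(al, be) \<in> {(al, be). al < a \<and> be \<le> b \<and> al + be + 1 = r}.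
          dl (zw (twos be @ [3] @ twos al)) w)
    + 2 * ((if a \<ge> r then 1 else 0) - (if b \<ge> r then 1 else 0)) *
        (\<Sum>i = 1..r. (-1) ^ i * shmul (dl (zw [2 * i + 1])) (dl (zw (twos (r - i)))) w))"

end

theory Submission
  imports Defs
begin

definition alt :: "nat \<Rightarrow> letter" where "alt k = (if odd k then X1 else X0)"
definition Lt :: "nat \<Rightarrow> nat \<Rightarrow> letter" where "Lt c k = (if (k \<le> c) = odd k then X1 else X0)"

lemma zw_Nil[simp]: "zw [] = []" by (simp add: zw_def)
lemma zw_Cons: "zw (k # ks) = replicate (k - 1) X0 @ [X1] @ zw ks" by (simp add: zw_def)
lemma zw_append: "zw (xs @ ys) = zw xs @ zw ys" by (simp add: zw_def)
lemma twos_Suc: "twos (Suc m) = twos m @ [2]" by (simp add: twos_def replicate_append_same)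
lemma twos_Suc': "twos (Suc m) = 2 # twos m" by (simp add: twos_def)
lemma twos_0[simp]: "twos 0 = []" by (simp add: twos_def)

lemma Z2_map: "zw (twos m) = map alt [0..<2*m]"
proof (induction m)
  case 0 then show ?case by simp
next
  case (Suc m)
  have "[0..<2 * Suc m] = [0..<2*m] @ [2*m, 2*m+1]"
    by simp
  have p: "even (2*m)" "odd (2*m+1)" by auto
  then show ?case using Suc by (simp add: twos_Suc zw_append zw_Cons alt_def)
qed

lemma len_Z2[simp]: "length (zw (twos m)) = 2 * m" by (simp add: Z2_map)

lemma W_map: "zw (twos al @ [3] @ twos be) = map (Lt (2*al)) [0..<2*al+2*be+3]"
proof (rule nth_equalityI)
  show "length (zw (twos al @ [3] @ twos be)) = length (map (Lt (2*al)) [0..<2*al+2*be+3])"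
    by (simp add: zw_append zw_Cons numeral_3_eq_3)
next
  fix k assume "k < length (zw (twos al @ [3] @ twos be))"
  then have k: "k < 2*al+2*be+3" by (simp add: zw_append zw_Cons numeral_3_eq_3)
  have e: "zw (twos al @ [3] @ twos be) = map alt [0..<2*al] @ [X0, X0, X1] @ map alt [0..<2*be]"
    by (simp add: zw_append zw_Cons Z2_map numeral_3_eq_3)
  show "zw (twos al @ [3] @ twos be) ! k = map (Lt (2*al)) [0..<2*al+2*be+3] ! k"
    unfolding e using k
    by (auto simp: nth_append alt_def Lt_def nth_Cons' split: if_splits; presburger)
qed

lemma Q_map: "zw (twos r) @ [X0] = map (Lt (2*r)) [0..<2*r+1]"
  by (rule nth_equalityI) (auto simp: Z2_map nth_append alt_def Lt_def)


definition Ea :: "nat \<Rightarrow> nat \<Rightarrow> letter" where "Ea a p = (if (p \<le> 2*a+1) = even p then X1 else X0)"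

lemma if_letter_eq: "((if A then X1 else X0) = (if B then X1 else X0)) \<longleftrightarrow> (A \<longleftrightarrow> B)"
  by auto

lemma e_nth:
  assumes "p \<le> 2*a+2*b+4"
  shows "(X1 # zw (twos a @ [3] @ twos b) @ [X0]) ! p = Ea a p"
proof -
  consider "p = 0" | "0 < p" "p \<le> 2*a+2*b+3" | "p = 2*a+2*b+4" using assms by linarith
  then show ?thesis
  proof cases
    case 1 then show ?thesis by (simp add: Ea_def)
  next
    case 2
    then obtain q where q: "p = Suc q" "q < 2*a+2*b+3" by (cases p) auto
    then show ?thesis unfolding W_map using q
      by (simp add: nth_append Ea_def Lt_def if_letter_eq)
  next
    case 3 then show ?thesis unfolding W_map by (simp add: nth_append Ea_def)
  qed
qed

lemma e_len: "length (X1 # zw (twos a @ [3] @ twos b) @ [X0]) = 2*a+2*b+5"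
  unfolding W_map by simp

lemma block_gen:
  assumes "length e = N + 2" "\<And>p. p \<le> N + 1 \<Longrightarrow> e ! p = g p" "i + m \<le> N"
  shows "take m (drop (i+1) e) = map (\<lambda>k. g (i+1+k)) [0..<m]"
proof (rule nth_equalityI)
  show "length (take m (drop (i+1) e)) = length (map (\<lambda>k. g (i+1+k)) [0..<m])"
    using assms by simp
next
  fix k assume "k < length (take m (drop (i+1) e))"
  then have k: "k < m" using assms by simp
  then show "take m (drop (i+1) e) ! k = map (\<lambda>k. g (i+1+k)) [0..<m] ! k"
    using assms by (simp add: nth_take nth_drop add.commute add.left_commute)
qed

lemma block_eq:
  assumes "i + (2*r + 1) \<le> 2*a+2*b+3"
  shows "take (2*r+1) (drop (i+1) (X1 # zw (twos a @ [3] @ twos b) @ [X0]))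
         = map (\<lambda>k. Ea a (i+1+k)) [0..<2*r+1]"
  by (rule block_gen[where N="2*a+2*b+3"]) (use assms e_len e_nth in auto)

lemma map_upt_cong: "(\<And>k. k < N \<Longrightarrow> f k = g k) \<Longrightarrow> map f [0..<N] = map g [0..<N]"
  by simp

lemma rev_map_upt: "rev (map f [0..<N]) = map (\<lambda>k. f (N - 1 - k)) [0..<N]"
  by (rule nth_equalityI) (auto simp: rev_nth)


definition Wd :: "nat \<Rightarrow> nat \<Rightarrow> word" where "Wd al be = zw (twos al @ [3] @ twos be)"
definition Qd :: "nat \<Rightarrow> word" where "Qd r = zw (twos r) @ [X0]"

definition hI :: "nat \<Rightarrow> nat \<Rightarrow> nat \<Rightarrow> poly" where
  "hI a r i = Iseg (Ea a i) (map (\<lambda>k. Ea a (i+1+k)) [0..<2*r+1]) (Ea a (i+2*r+2))"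

lemma Iseg_10: "Iseg X1 f X0 = dl f" by (simp add: Iseg_def)
lemma Iseg_01: "Iseg X0 f X1 = (\<lambda>w. (-1) ^ length f * dl (rev f) w)" by (simp add: Iseg_def)
lemma Iseg_same: "f \<noteq> [] \<Longrightarrow> Iseg c f c = (\<lambda>_. 0)" by (cases c) (simp_all add: Iseg_def)
lemma Iseg_Nil: "Iseg c [] d = dl []" by (cases c; cases d) (simp_all add: Iseg_def)

lemma hI_1:
  assumes "even i" "i div 2 \<le> a" "a < i div 2 + r"
  shows "hI a r i = dl (Wd (a - i div 2) (i div 2 + r - a - 1))"
proof -
  obtain s where s: "i = 2*s" using assms(1) by blast
  then have ss: "i div 2 = s" by simp
  have l1: "Ea a i = X1" using assms s by (simp add: Ea_def)
  have l2: "Ea a (i+2*r+2) = X0" using assms s by (simp add: Ea_def)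
  have n: "2*(a-s) + 2*(s+r-a-1) + 3 = 2*r+1" using assms ss by simp
  have m: "map (\<lambda>k. Ea a (i+1+k)) [0..<2*r+1] = map (Lt (2*(a-s))) [0..<2*r+1]"
    by (rule map_upt_cong) (use assms s in \<open>simp add: Ea_def Lt_def if_letter_eq; presburger\<close>)
  have "hI a r i = dl (map (Lt (2*(a-s))) [0..<2*r+1])" unfolding hI_def l1 l2 Iseg_10 m ..
  moreover have "Wd (a - i div 2) (i div 2 + r - a - 1) = map (Lt (2*(a-s))) [0..<2*r+1]"
    unfolding Wd_def W_map ss n ..
  ultimately show ?thesis by simp
qed

lemma hI_2:
  assumes "i = 2*(a-r)" "r \<le> a"
  shows "hI a r i = dl (Qd r)"
proof -
  have l1: "Ea a i = X1" using assms by (simp add: Ea_def)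
  have l2: "Ea a (i+2*r+2) = X0" using assms by (simp add: Ea_def)
  have m: "map (\<lambda>k. Ea a (i+1+k)) [0..<2*r+1] = map (Lt (2*r)) [0..<2*r+1]"
    by (rule map_upt_cong) (use assms in \<open>simp add: Ea_def Lt_def if_letter_eq; presburger\<close>)
  show ?thesis unfolding hI_def l1 l2 Iseg_10 Qd_def Q_map m ..
qed

lemma hI_3:
  assumes "odd i" "i div 2 < a" "a \<le> i div 2 + r"
  shows "hI a r i = (\<lambda>w. - dl (Wd (i div 2 + r - a) (a - i div 2 - 1)) w)"
proof -
  obtain s where s: "i = 2*s+1" using assms(1) oddE by blast
  then have ss: "i div 2 = s" by simp
  have l1: "Ea a i = X0" using assms s by (simp add: Ea_def)
  have l2: "Ea a (i+2*r+2) = X1" using assms s by (simp add: Ea_def)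
  have n: "2*(s+r-a) + 2*(a-s-1) + 3 = 2*r+1" using assms ss by simp
  have "rev (map (\<lambda>k. Ea a (i+1+k)) [0..<2*r+1]) = map (Lt (2*(s+r-a))) [0..<2*r+1]"
    unfolding rev_map_upt
    by (rule map_upt_cong) (use assms s in \<open>simp add: Ea_def Lt_def if_letter_eq; presburger\<close>)
  then show ?thesis unfolding hI_def l1 l2 Iseg_01 Wd_def W_map ss n by simp
qed

lemma hI_4:
  assumes "i = 2*a+1"
  shows "hI a r i = (\<lambda>w. - dl (Qd r) w)"
proof -
  have l1: "Ea a i = X0" using assms by (simp add: Ea_def)
  have l2: "Ea a (i+2*r+2) = X1" using assms by (simp add: Ea_def)
  have "rev (map (\<lambda>k. Ea a (i+1+k)) [0..<2*r+1]) = map (Lt (2*r)) [0..<2*r+1]"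
    unfolding rev_map_upt
    by (rule map_upt_cong) (use assms in \<open>simp add: Ea_def Lt_def if_letter_eq; presburger\<close>)
  then show ?thesis unfolding hI_def l1 l2 Iseg_01 Qd_def Q_map by simp
qed

lemma hI_0:
  assumes "\<not> (even i \<and> i div 2 \<le> a \<and> a < i div 2 + r)" "\<not> (i = 2*(a-r) \<and> r \<le> a)"
    "\<not> (odd i \<and> i div 2 < a \<and> a \<le> i div 2 + r)" "i \<noteq> 2*a+1"
  shows "hI a r i = (\<lambda>_. 0)"
proof -
  have "Ea a i = Ea a (i+2*r+2)"
    using assms unfolding Ea_def if_letter_eq by presburger
  then show ?thesis unfolding hI_def by (simp add: Iseg_same)
qed

lemma hI_val:
  "hI a r i x =
     (if even i \<and> i div 2 \<le> a \<and> a < i div 2 + r then dl (Wd (a - i div 2) (i div 2 + r - a - 1)) x else 0)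
   + (if i = 2*(a-r) \<and> r \<le> a then dl (Qd r) x else 0)
   - (if odd i \<and> i div 2 < a \<and> a \<le> i div 2 + r then dl (Wd (i div 2 + r - a) (a - i div 2 - 1)) x else 0)
   - (if i = 2*a+1 then dl (Qd r) x else 0)"
proof -
  consider (c1) "even i \<and> i div 2 \<le> a \<and> a < i div 2 + r" | (c2) "i = 2*(a-r) \<and> r \<le> a"
    | (c3) "odd i \<and> i div 2 < a \<and> a \<le> i div 2 + r" | (c4) "i = 2*a+1"
    | (c0) "\<not> (even i \<and> i div 2 \<le> a \<and> a < i div 2 + r)" "\<not> (i = 2*(a-r) \<and> r \<le> a)"
    "\<not> (odd i \<and> i div 2 < a \<and> a \<le> i div 2 + r)" "i \<noteq> 2*a+1" by blast
  then show ?thesis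
  proof cases
    case c1
    then have "\<not> (i = 2*(a-r) \<and> r \<le> a)" "\<not> odd i" "i \<noteq> 2*a+1" by auto
    with c1 show ?thesis using hI_1 by auto
  next
    case c2
    then have "\<not> (even i \<and> i div 2 \<le> a \<and> a < i div 2 + r)" "\<not> odd i" "i \<noteq> 2*a+1" by auto
    with c2 show ?thesis using hI_2 by auto
  next
    case c3
    then have "\<not> even i" "\<not> (i = 2*(a-r) \<and> r \<le> a)" "i \<noteq> 2*a+1" by auto
    with c3 show ?thesis using hI_3 by auto
  next
    case c4
    then have "\<not> even i" "\<not> (i = 2*(a-r) \<and> r \<le> a)" "\<not> (i div 2 < a)" by auto
    with c4 show ?thesis using hI_4 by auto
  next
    case c0
    then show ?thesis using hI_0[OF c0] by auto
  qed
qed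


lemma sumA:
  assumes "1 \<le> r" "r \<le> a + b"
  shows "(\<Sum>i\<in>{0..2*a+2*b+2-2*r}. if even i \<and> i div 2 \<le> a \<and> a < i div 2 + r then dl (Wd (a - i div 2) (i div 2 + r - a - 1)) x else 0)
    = (\<Sum>(al, be) \<in> {(al, be). al \<le> a \<and> be \<le> b \<and> al + be + 1 = r}. dl (zw (twos al @ [3] @ twos be)) x)"
proof -
  have "(\<Sum>i\<in>{0..2*a+2*b+2-2*r}. if even i \<and> i div 2 \<le> a \<and> a < i div 2 + r then dl (Wd (a - i div 2) (i div 2 + r - a - 1)) x else 0)
    = (\<Sum>i\<in>{i\<in>{0..2*a+2*b+2-2*r}. even i \<and> i div 2 \<le> a \<and> a < i div 2 + r}. dl (Wd (a - i div 2) (i div 2 + r - a - 1)) x)"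
    by (subst sum.inter_filter) auto
  also have "\<dots> = (\<Sum>(al, be) \<in> {(al, be). al \<le> a \<and> be \<le> b \<and> al + be + 1 = r}. dl (zw (twos al @ [3] @ twos be)) x)"
  proof (rule sum.reindex_bij_witness[where j="\<lambda>i. (a - i div 2, i div 2 + r - a - 1)" and i="\<lambda>(al,be). 2*(a-al)"])
    fix i assume "i \<in> {i\<in>{0..2*a+2*b+2-2*r}. even i \<and> i div 2 \<le> a \<and> a < i div 2 + r}"
    then obtain s where s: "i = 2*s" "s \<le> a" "a < s + r" "2*s \<le> 2*a+2*b+2-2*r" by auto
    then show "(case (a - i div 2, i div 2 + r - a - 1) of (al, be) \<Rightarrow> 2 * (a - al)) = i" by auto
    have "s + r - a - 1 \<le> b" using s(3,4) assms(2) by arith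
    then show "(a - i div 2, i div 2 + r - a - 1) \<in> {(al, be). al \<le> a \<and> be \<le> b \<and> al + be + 1 = r}"
      using s by simp
    show "(case (a - i div 2, i div 2 + r - a - 1) of (al, be) \<Rightarrow> dl (zw (twos al @ [3] @ twos be)) x) = dl (Wd (a - i div 2) (i div 2 + r - a - 1)) x"
      using s by (simp add: Wd_def)
  next
    fix p assume "p \<in> {(al, be). al \<le> a \<and> be \<le> b \<and> al + be + 1 = r}"
    then show "(a - (case p of (al, be) \<Rightarrow> 2 * (a - al)) div 2, (case p of (al, be) \<Rightarrow> 2 * (a - al)) div 2 + r - a - 1) = p"
      "(case p of (al, be) \<Rightarrow> 2 * (a - al)) \<in> {i\<in>{0..2*a+2*b+2-2*r}. even i \<and> i div 2 \<le> a \<and> a < i div 2 + r}"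
      by (auto; presburger)+
  qed
  finally show ?thesis .
qed

lemma sumC:
  assumes "1 \<le> r" "r \<le> a + b"
  shows "(\<Sum>i\<in>{0..2*a+2*b+2-2*r}. if odd i \<and> i div 2 < a \<and> a \<le> i div 2 + r then dl (Wd (i div 2 + r - a) (a - i div 2 - 1)) x else 0)
    = (\<Sum>(al, be) \<in> {(al, be). al < a \<and> be \<le> b \<and> al + be + 1 = r}. dl (zw (twos be @ [3] @ twos al)) x)"
proof -
  have "(\<Sum>i\<in>{0..2*a+2*b+2-2*r}. if odd i \<and> i div 2 < a \<and> a \<le> i div 2 + r then dl (Wd (i div 2 + r - a) (a - i div 2 - 1)) x else 0)
    = (\<Sum>i\<in>{i\<in>{0..2*a+2*b+2-2*r}. odd i \<and> i div 2 < a \<and> a \<le> i div 2 + r}. dl (Wd (i div 2 + r - a) (a - i div 2 - 1)) x)"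
    by (subst sum.inter_filter) auto
  also have "\<dots> = (\<Sum>(al, be) \<in> {(al, be). al < a \<and> be \<le> b \<and> al + be + 1 = r}. dl (zw (twos be @ [3] @ twos al)) x)"
  proof (rule sum.reindex_bij_witness[where j="\<lambda>i. (a - i div 2 - 1, i div 2 + r - a)" and i="\<lambda>(al,be). 2*(a-al-1)+1"])
    fix i assume "i \<in> {i\<in>{0..2*a+2*b+2-2*r}. odd i \<and> i div 2 < a \<and> a \<le> i div 2 + r}"
    then obtain s where s: "i = 2*s+1" "s < a" "a \<le> s + r" "2*s+1 \<le> 2*a+2*b+2-2*r" by (auto elim: oddE)
    then show "(case (a - i div 2 - 1, i div 2 + r - a) of (al, be) \<Rightarrow> 2*(a-al-1)+1) = i" by auto
    have "s + r - a \<le> b" using s(3,4) assms(2) by arith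
    then show "(a - i div 2 - 1, i div 2 + r - a) \<in> {(al, be). al < a \<and> be \<le> b \<and> al + be + 1 = r}"
      using s by simp
    show "(case (a - i div 2 - 1, i div 2 + r - a) of (al, be) \<Rightarrow> dl (zw (twos be @ [3] @ twos al)) x) = dl (Wd (i div 2 + r - a) (a - i div 2 - 1)) x"
      using s by (simp add: Wd_def)
  next
    fix p assume "p \<in> {(al, be). al < a \<and> be \<le> b \<and> al + be + 1 = r}"
    then show "(a - (case p of (al, be) \<Rightarrow> 2*(a-al-1)+1) div 2 - 1, (case p of (al, be) \<Rightarrow> 2*(a-al-1)+1) div 2 + r - a) = p"
      "(case p of (al, be) \<Rightarrow> 2*(a-al-1)+1) \<in> {i\<in>{0..2*a+2*b+2-2*r}. odd i \<and> i div 2 < a \<and> a \<le> i div 2 + r}"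
      by (auto; presburger)+
  qed
  finally show ?thesis .
qed

lemma sumB:
  fixes a b r :: nat shows "(\<Sum>i\<in>{0..2*a+2*b+2-2*r}. if i = 2*(a-r) \<and> r \<le> a then (y::rat) else 0) = (if r \<le> a then y else 0)"
proof (cases "r \<le> a")
  case True
  then have "{i\<in>{0..2*a+2*b+2-2*r}. i = 2*(a-r) \<and> r \<le> a} = {2*(a-r)}" by auto
  moreover have "(\<Sum>i\<in>{0..2*a+2*b+2-2*r}. if i = 2*(a-r) \<and> r \<le> a then y else 0) = (\<Sum>i\<in>{i\<in>{0..2*a+2*b+2-2*r}. i = 2*(a-r) \<and> r \<le> a}. y)"
    by (rule sum.inter_filter[symmetric]) simp
  ultimately show ?thesis using True by simp
qed simp

lemma sumD:
  fixes a b r :: nat shows "(\<Sum>i\<in>{0..2*a+2*b+2-2*r}. if i = 2*a+1 then (y::rat) else 0) = (if r \<le> b then y else 0)"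
proof -
  have "{i\<in>{0..2*a+2*b+2-2*r}. i = 2*a+1} = (if r \<le> b then {2*a+1} else {})" by auto
  moreover have "(\<Sum>i\<in>{0..2*a+2*b+2-2*r}. if i = 2*a+1 then y else 0) = (\<Sum>i\<in>{i\<in>{0..2*a+2*b+2-2*r}. i = 2*a+1}. y)"
    by (rule sum.inter_filter[symmetric]) simp
  ultimately show ?thesis by simp
qed

lemma sum_hI:
  assumes "1 \<le> r" "r \<le> a + b"
  shows "(\<Sum>i\<in>{0..2*a+2*b+2-2*r}. hI a r i x) =
     (\<Sum>(al, be) \<in> {(al, be). al \<le> a \<and> be \<le> b \<and> al + be + 1 = r}. dl (zw (twos al @ [3] @ twos be)) x)
   - (\<Sum>(al, be) \<in> {(al, be). al < a \<and> be \<le> b \<and> al + be + 1 = r}. dl (zw (twos be @ [3] @ twos al)) x)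
   + ((if a \<ge> r then 1 else 0) - (if b \<ge> r then 1 else 0)) * dl (Qd r) x"
  unfolding hI_val sum.distrib sum_subtractf sumA[OF assms] sumC[OF assms] sumB sumD
  by (simp add: algebra_simps)


lemma pre_Nil[simp]: "pre a p [] = 0" by (simp add: pre_def)
lemma pre_Cons[simp]: "pre a p (c # w) = (if c = a then p w else 0)" by (simp add: pre_def)

lemma sh_len: "sh u v w \<noteq> 0 \<Longrightarrow> length w = length u + length v"
proof (induction u v arbitrary: w rule: sh.induct)
  case (1 v) then show ?case by (auto simp: dl_def split: if_splits)
next
  case (2 a u) then show ?case by (auto simp: dl_def split: if_splits)
next
  case (3 a u b v)
  show ?case
  proof (cases w)
    case Nil with 3(3) show ?thesis by simp
  next
    case (Cons c w')
    have h: "pre a (sh u (b # v)) (c # w') + pre b (sh (a # u) v) (c # w') \<noteq> 0"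
      using 3(3) Cons by simp
    show ?thesis
    proof (cases "pre a (sh u (b # v)) (c # w') \<noteq> 0")
      case True
      then have "sh u (b # v) w' \<noteq> 0" by (simp split: if_split_asm)
      from 3(1)[OF this] show ?thesis using Cons by simp
    next
      case False
      with h have "pre b (sh (a # u) v) (c # w') \<noteq> 0" by simp
      then have "sh (a # u) v w' \<noteq> 0" by (simp split: if_split_asm)
      from 3(2)[OF this] show ?thesis using Cons by simp
    qed
  qed
qed

definition hom :: "nat \<Rightarrow> poly \<Rightarrow> bool" where
  "hom d p \<longleftrightarrow> (\<forall>w. p w \<noteq> 0 \<longrightarrow> length w = d)"

lemma finite_len_eq: "finite {w :: word. length w = d}"
proof -
  have "{w :: word. length w = d} = {xs. set xs \<subseteq> UNIV \<and> length xs = d}" by auto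
  then show ?thesis using finite_lists_length_eq[of "UNIV :: letter set" d] by simp
qed

lemma finite_len_le: "finite {w :: word. length w \<le> d}"
proof -
  have "{w :: word. length w \<le> d} = {xs. set xs \<subseteq> UNIV \<and> length xs \<le> d}" by auto
  then show ?thesis using finite_lists_length_le[of "UNIV :: letter set" d] by simp
qed

lemma hom_fsupp: "hom d p \<Longrightarrow> fsupp p"
  unfolding fsupp_def hom_def
  by (rule finite_subset[OF _ finite_len_eq[of d]]) auto

lemma finite_pairs: "finite {(u :: word, v :: word). length u + length v = n}"
  by (rule finite_subset[of _ "{u. length u \<le> n} \<times> {v. length v \<le> n}"])
     (auto intro: finite_len_le)

lemma sum_single:
  assumes "finite S" "x \<in> S" "\<And>y. y \<in> S \<Longrightarrow> y \<noteq> x \<Longrightarrow> f y = 0"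
  shows "sum f S = f x"
proof -
  have "sum f S = f x + sum f (S - {x})" using assms by (simp add: sum.remove)
  also have "sum f (S - {x}) = 0" using assms by (intro sum.neutral) auto
  finally show ?thesis by simp
qed

lemma dl_nz[simp]: "dl u a \<noteq> 0 \<longleftrightarrow> a = u" by (simp add: dl_def)
lemma dl_eq0[simp]: "dl u a = 0 \<longleftrightarrow> a \<noteq> u" by (simp add: dl_def)
lemma dl_self[simp]: "dl u u = 1" by (simp add: dl_def)

lemma dl_prod_nz: "dl u a * q * dl v b \<noteq> 0 \<Longrightarrow> a = u \<and> b = v"
  by (simp add: dl_def split: if_split_asm)

lemma shmul_dl: "shmul (dl u) (dl v) = sh u v"
proof
  fix w
  show "shmul (dl u) (dl v) w = sh u v w"
  proof (cases "length u + length v = length w")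
    case True
    then show ?thesis unfolding shmul_def
      apply (subst sum_single[where x="(u,v)"])
      by (auto simp: finite_pairs)
  next
    case False
    then have "sh u v w = 0" using sh_len by metis
    moreover have "shmul (dl u) (dl v) w = 0" unfolding shmul_def
      using False by (intro sum.neutral) (auto simp: dl_def)
    ultimately show ?thesis by simp
  qed
qed

lemma sh_Nil_right[simp]: "sh u [] = dl u"
  by (cases u) auto

lemma shmul_unit_left[simp]: "shmul (dl []) q = q"
proof
  fix w
  show "shmul (dl []) q w = q w" unfolding shmul_def
    apply (subst sum_single[where x="([],w)"])
      apply (simp add: finite_pairs)
     apply simp
    apply auto
    done
qed

lemma shmul_unit_right[simp]: "shmul p (dl []) = p"
proof
  fix w
  show "shmul p (dl []) w = p w" unfolding shmul_def
    apply (subst sum_single[where x="(w,[])"])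
      apply (simp add: finite_pairs)
     apply simp
    apply auto
    done
qed

lemma sum_nz: "sum f S \<noteq> (0::rat) \<Longrightarrow> \<exists>x\<in>S. f x \<noteq> 0"
  by (meson sum.neutral)

lemma hom_shmul: "hom d p \<Longrightarrow> hom e q \<Longrightarrow> hom (d + e) (shmul p q)"
  unfolding hom_def shmul_def
proof (intro allI impI)
  fix w assume a1: "\<forall>w. p w \<noteq> 0 \<longrightarrow> length w = d" and a2: "\<forall>w. q w \<noteq> 0 \<longrightarrow> length w = e"
    and "(\<Sum>(u, v)\<in>{(u, v). length u + length v = length w}. p u * q v * sh u v w) \<noteq> 0"
  then obtain u v where "p u * q v * sh u v w \<noteq> 0" by (auto dest!: sum_nz)
  then show "length w = d + e" using a1 a2 sh_len[of u v w] by auto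
qed

lemma hom_dl: "hom (length u) (dl u)" by (simp add: hom_def dl_def)
lemma hom_zero: "hom d (\<lambda>_. 0)" by (simp add: hom_def)
lemma hom_add: "hom d p \<Longrightarrow> hom d q \<Longrightarrow> hom d (\<lambda>w. p w + q w)" unfolding hom_def by (metis add.right_neutral add_0)
lemma hom_diff: "hom d p \<Longrightarrow> hom d q \<Longrightarrow> hom d (\<lambda>w. p w - q w)" unfolding hom_def by (metis diff_0 diff_zero minus_zero)
lemma hom_smul: "hom d p \<Longrightarrow> hom d (\<lambda>w. c * p w)" by (auto simp: hom_def)
lemma hom_sum: "(\<And>i. i \<in> A \<Longrightarrow> hom d (f i)) \<Longrightarrow> hom d (\<lambda>w. \<Sum>i\<in>A. f i w)"
  unfolding hom_def by (auto dest!: sum_nz)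
lemma hom_Nil: "hom d p \<Longrightarrow> 0 < d \<Longrightarrow> p [] = 0" by (auto simp: hom_def)

lemma wcomp_hom_eq: "hom n p \<Longrightarrow> wcomp n p = p"
  by (auto simp: hom_def wcomp_def fun_eq_iff)
lemma wcomp_hom_ne: "hom d p \<Longrightarrow> d \<noteq> n \<Longrightarrow> wcomp n p = (\<lambda>_. 0)"
  by (auto simp: hom_def wcomp_def fun_eq_iff)


lemma shideal_diff: "f \<in> shideal G \<Longrightarrow> g \<in> shideal G \<Longrightarrow> (\<lambda>x. f x - g x) \<in> shideal G"
proof -
  assume "f \<in> shideal G" "g \<in> shideal G"
  then have "(\<lambda>x. f x + (\<lambda>x. (-1) * g x) x) \<in> shideal G" by (intro shideal.add shideal.smul)
  then show ?thesis by simp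
qed

lemma shideal_sum: "finite A \<Longrightarrow> (\<And>i. i \<in> A \<Longrightarrow> f i \<in> shideal G) \<Longrightarrow> (\<lambda>x. \<Sum>i\<in>A. f i x) \<in> shideal G"
proof (induction A rule: finite_induct)
  case empty then show ?case by (simp add: shideal.zero)
next
  case (insert a A)
  then have "(\<lambda>x. f a x + (\<lambda>x. \<Sum>i\<in>A. f i x) x) \<in> shideal G" by (intro shideal.add) auto
  then show ?case using insert by simp
qed

lemma shideal_mono: "f \<in> shideal G \<Longrightarrow> G \<subseteq> G' \<Longrightarrow> f \<in> shideal G'"
  by (induction rule: shideal.induct) (auto intro: shideal.intros)

lemma Rid_RAid: "f \<in> Rid \<Longrightarrow> f \<in> RAid"
  unfolding Rid_def RAid_def by (erule shideal_mono) auto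

lemma qspan_sum: "finite A \<Longrightarrow> (\<And>i. i \<in> A \<Longrightarrow> f i \<in> qspan S) \<Longrightarrow> (\<lambda>x. \<Sum>i\<in>A. f i x) \<in> qspan S"
proof (induction A rule: finite_induct)
  case empty then show ?case by (simp add: qspan.zero)
next
  case (insert a A)
  then have "(\<lambda>x. f a x + (\<lambda>x. \<Sum>i\<in>A. f i x) x) \<in> qspan S" by (intro qspan.add) auto
  then show ?case using insert by simp
qed

lemma qspan_diff: "f \<in> qspan S \<Longrightarrow> g \<in> qspan S \<Longrightarrow> (\<lambda>x. f x - g x) \<in> qspan S"
proof -
  assume "f \<in> qspan S" "g \<in> qspan S"
  then have "(\<lambda>x. f x + (\<lambda>x. (-1) * g x) x) \<in> qspan S" by (intro qspan.add qspan.smul)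
  then show ?thesis by simp
qed

lemma dl_Cons_Cons: "dl (c # u) (d # v) = (if c = d then dl u v else 0)" by (simp add: dl_def)
lemma dl_Cons_Nil: "dl (c # u) [] = 0" by (simp add: dl_def)
lemma dl_Nil_Cons: "dl [] (d # v) = 0" by (simp add: dl_def)

lemma Wd_0: "Wd 0 be = X0 # X0 # X1 # zw (twos be)"
  by (simp add: Wd_def zw_Cons numeral_3_eq_3)
lemma Wd_Suc: "Wd (Suc al) be = X0 # X1 # Wd al be"
  by (simp add: Wd_def twos_Suc' zw_Cons)
lemma Qd_Suc: "Qd (Suc k) = X0 # X1 # Qd k"
  by (simp add: Qd_def twos_Suc' zw_Cons)
lemma Z2_Suc: "zw (twos (Suc k)) = X0 # X1 # zw (twos k)"
  by (simp add: twos_Suc' zw_Cons)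
lemma Qd_0: "Qd 0 = [X0]" by (simp add: Qd_def)

lemma len_Wd: "length (Wd al be) = 2*al + 2*be + 3"
  unfolding Wd_def W_map by simp
lemma dl_len: "length u \<noteq> length x \<Longrightarrow> dl u x = 0" by (auto simp: dl_def)
lemma dl_Wd_short: "length x < 3 \<Longrightarrow> dl (Wd al be) x = 0" by (rule dl_len) (simp add: len_Wd)

lemma reg_formula:
  "sh (zw (twos k)) [X0] = (\<lambda>x. dl (Qd k) x + 2 * (\<Sum>al<k. dl (Wd al (k - 1 - al)) x))"
proof (induction k)
  case 0 then show ?case by (simp add: Qd_0)
next
  case (Suc k)
  let ?Z = "zw (twos k)"
  show ?case
  proof
    fix x
    show "sh (zw (twos (Suc k))) [X0] x = dl (Qd (Suc k)) x + 2 * (\<Sum>al<Suc k. dl (Wd al (Suc k - 1 - al)) x)"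
    proof (cases x)
      case Nil then show ?thesis by (simp add: Z2_Suc Qd_Suc dl_Cons_Nil dl_Wd_short)
    next
      case (Cons c1 x1)
      show ?thesis
      proof (cases x1)
        case Nil then show ?thesis using Cons
          by (simp add: Z2_Suc Qd_Suc dl_Cons_Nil dl_Cons_Cons dl_Wd_short)
      next
        case (Cons c2 x2)
        have ih: "sh ?Z [X0] x2 = dl (Qd k) x2 + 2 * (\<Sum>al<k. dl (Wd al (k - 1 - al)) x2)"
          using Suc by simp
        show ?thesis using \<open>x = c1 # x1\<close> Cons ih
          by (cases c1; cases c2) (simp_all add: Z2_Suc Qd_Suc Wd_0 Wd_Suc dl_Cons_Cons sum.lessThan_Suc_shift del: sum.lessThan_Suc)
      qed
    qed
  qed
qed


lemma rep_X1: "replicate p X0 @ X1 # s = replicate q X0 @ X1 # t \<Longrightarrow> p = q \<and> s = t"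
proof (induction p arbitrary: q)
  case 0 then show ?case by (cases q) simp_all
next
  case (Suc p)
  show ?case
  proof (cases q)
    case 0 then show ?thesis using Suc.prems by simp
  next
    case (Suc q')
    then have "replicate p X0 @ X1 # s = replicate q' X0 @ X1 # t" using Suc.prems by simp
    from Suc.IH[OF this] show ?thesis using Suc by simp
  qed
qed

lemma zw_inj: "pos k \<Longrightarrow> pos k' \<Longrightarrow> zw k = zw k' \<Longrightarrow> k = k'"
proof (induction k arbitrary: k')
  case Nil then show ?case by (cases k') (simp_all add: zw_Cons)
next
  case (Cons x k)
  then obtain y k'' where k': "k' = y # k''" by (cases k') (simp_all add: zw_Cons)
  from Cons.prems have "replicate (x-1) X0 @ X1 # zw k = replicate (y-1) X0 @ X1 # zw k''"
    by (simp add: zw_Cons k')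
  from rep_X1[OF this] have "x - 1 = y - 1" "zw k = zw k''" by auto
  moreover have "0 < x" "0 < y" "pos k" "pos k''" using Cons.prems k' by (auto simp: pos_def)
  ultimately show ?case using Cons.IH[of k''] k' by simp
qed

lemma st_sum: "st k l m \<noteq> 0 \<Longrightarrow> sum_list m = sum_list k + sum_list l"
proof (induction k l arbitrary: m rule: st.induct)
  case (1 v) then show ?case by (auto split: if_split_asm)
next
  case (2 i u) then show ?case by (auto split: if_split_asm)
next
  case (3 i u j v)
  show ?case
  proof (cases m)
    case Nil with 3(4) show ?thesis by simp
  next
    case (Cons c m')
    have h: "pre i (st u (j # v)) (c # m') + pre j (st (i # u) v) (c # m') + pre (i + j) (st u v) (c # m') \<noteq> 0"
      using 3(4) Cons by simp
    then consider (A) "pre i (st u (j # v)) (c # m') \<noteq> 0" | (B) "pre j (st (i # u) v) (c # m') \<noteq> 0"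
      | (C) "pre (i + j) (st u v) (c # m') \<noteq> 0" by fastforce
    then show ?thesis
    proof cases
      case A
      then have "c = i" "st u (j # v) m' \<noteq> 0" by (simp_all split: if_split_asm)
      with 3(1)[of m'] Cons show ?thesis by simp
    next
      case B
      then have "c = j" "st (i # u) v m' \<noteq> 0" by (simp_all split: if_split_asm)
      with 3(2)[of m'] Cons show ?thesis by simp
    next
      case C
      then have "c = i + j" "st u v m' \<noteq> 0" by (simp_all split: if_split_asm)
      with 3(3)[of m'] Cons show ?thesis by simp
    qed
  qed
qed

lemma pos_len: "pos k \<Longrightarrow> length k \<le> sum_list k"
  by (induction k) (auto simp: pos_def)

lemma finite_pos_sum: "finite {k. pos k \<and> sum_list k \<le> s}"
proof -
  have "{k. pos k \<and> sum_list k \<le> s} \<subseteq> {xs. set xs \<subseteq> {0..s} \<and> length xs \<le> s}"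
    using pos_len by (auto dest: member_le_sum_list) (meson le_trans)
  then show ?thesis by (rule finite_subset) (rule finite_lists_length_le, simp)
qed

lemma finite_st_pairs: "finite {(k, l). sum_list k + sum_list l = s \<and> pos k \<and> pos l}"
  by (rule finite_subset[of _ "{k. pos k \<and> sum_list k \<le> s} \<times> {k. pos k \<and> sum_list k \<le> s}"])
     (auto intro: finite_pos_sum)

lemma stmul_dl: "pos k \<Longrightarrow> pos l \<Longrightarrow> stmul (dl k) (dl l) = st k l"
proof
  fix m assume pk: "pos k" and pl: "pos l"
  show "stmul (dl k) (dl l) m = st k l m"
  proof (cases "sum_list k + sum_list l = sum_list m")
    case True
    show ?thesis unfolding stmul_def
      apply (subst sum_single[where x="(k,l)"])
      using True pk pl by (auto simp: finite_st_pairs)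
  next
    case False
    then have "st k l m = 0" using st_sum by metis
    moreover have "stmul (dl k) (dl l) m = 0" unfolding stmul_def
      using False by (intro sum.neutral) auto
    ultimately show ?thesis by simp
  qed
qed

lemma iota_inv_dl: "pos ks \<Longrightarrow> iota_inv (dl (zw ks)) = dl ks"
  unfolding iota_inv_def by (auto simp: fun_eq_iff dl_def dest: zw_inj)

lemma finite_M: "finite {m. pos m \<and> zw m = w}"
proof (cases "{m. pos m \<and> zw m = w} = {}")
  case False
  then obtain m0 where "pos m0" "zw m0 = w" by auto
  then have "{m. pos m \<and> zw m = w} \<subseteq> {m0}" using zw_inj by auto
  then show ?thesis by (rule finite_subset) simp
next
  case True then show ?thesis by (metis finite.emptyI)
qed

lemma iota_poly_sum:
  assumes "finite A" "\<And>i. i \<in> A \<Longrightarrow> pos (ks i)"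
  shows "iota_poly (\<lambda>m. \<Sum>i\<in>A. dl (ks i) m) w = (\<Sum>i\<in>A. dl (zw (ks i)) w)"
proof -
  have "iota_poly (\<lambda>m. \<Sum>i\<in>A. dl (ks i) m) w = (\<Sum>m\<in>{m. pos m \<and> zw m = w}. \<Sum>i\<in>A. dl (ks i) m)"
    by (simp add: iota_poly_def)
  also have "\<dots> = (\<Sum>i\<in>A. \<Sum>m\<in>{m. pos m \<and> zw m = w}. dl (ks i) m)" by (rule sum.swap)
  also have "\<dots> = (\<Sum>i\<in>A. dl (zw (ks i)) w)"
  proof (rule sum.cong)
    fix i assume "i \<in> A"
    then have "pos (ks i)" using assms by auto
    then show "(\<Sum>m\<in>{m. pos m \<and> zw m = w}. dl (ks i) m) = dl (zw (ks i)) w"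
      using finite_M[of w] by (auto simp: dl_def)
  qed simp
  finally show ?thesis .
qed

lemma iota_poly_add: "iota_poly (\<lambda>m. f m + g m) w = iota_poly f w + iota_poly g w"
  by (simp add: iota_poly_def sum.distrib)

lemma twos_app_Cons: "twos (Suc i) @ xs = 2 # (twos i @ xs)" by (simp add: twos_Suc')

lemma st_formula:
  assumes p: "0 < p"
  shows "st [p] (twos m) = (\<lambda>x. (\<Sum>i<Suc m. dl (twos i @ [p] @ twos (m - i)) x) + (\<Sum>i<m. dl (twos i @ [p + 2] @ twos (m - 1 - i)) x))"
proof (induction m)
  case 0 then show ?case by simp
next
  case (Suc m)
  show ?case
  proof
    fix x
    show "st [p] (twos (Suc m)) x = (\<Sum>i<Suc (Suc m). dl (twos i @ [p] @ twos (Suc m - i)) x) + (\<Sum>i<Suc m. dl (twos i @ [p + 2] @ twos (Suc m - 1 - i)) x)"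
    proof (cases x)
      case Nil then show ?thesis by (simp add: twos_Suc' dl_def)
    next
      case (Cons y x')
      have ih: "st [p] (twos m) x' = (\<Sum>i<Suc m. dl (twos i @ [p] @ twos (m - i)) x') + (\<Sum>i<m. dl (twos i @ [p + 2] @ twos (m - 1 - i)) x')"
        using Suc by simp
      have e1: "(\<Sum>i<Suc (Suc m). dl (twos i @ [p] @ twos (Suc m - i)) (y # x')) =
         dl (p # twos (Suc m)) (y # x') + (if y = 2 then (\<Sum>i<Suc m. dl (twos i @ [p] @ twos (m - i)) x') else 0)"
        by (simp only: sum.lessThan_Suc_shift) (simp add: twos_app_Cons dl_Cons_Cons)
      have e2: "(\<Sum>i<Suc m. dl (twos i @ [p + 2] @ twos (Suc m - 1 - i)) (y # x')) =
         dl ((p+2) # twos m) (y # x') + (if y = 2 then (\<Sum>i<m. dl (twos i @ [p + 2] @ twos (m - 1 - i)) x') else 0)"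
        by (simp only: sum.lessThan_Suc_shift) (simp add: twos_app_Cons dl_Cons_Cons)
      show ?thesis unfolding Cons e1 e2 using ih p
        by (simp add: twos_Suc' dl_Cons_Cons)
    qed
  qed
qed


definition Pt :: "nat \<Rightarrow> nat \<Rightarrow> poly" where
  "Pt l m = shmul (dl (zw [2*l+1])) (dl (zw (twos m)))"
definition Sg :: "nat \<Rightarrow> nat \<Rightarrow> poly" where
  "Sg l m = (\<lambda>w. \<Sum>i<Suc m. dl (zw (twos i @ [2*l+1] @ twos (m-i))) w)"

lemma pos_twos: "pos (twos i @ [p] @ twos j) \<longleftrightarrow> 0 < p" by (auto simp: pos_def twos_def)
lemma pos_twos': "pos (twos i)" by (auto simp: pos_def twos_def)

lemma Z2_Suc_snoc: "zw (twos (Suc m)) = (zw (twos m) @ [X0]) @ [X1]"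
  by (simp add: twos_Suc zw_append zw_Cons)

lemma stuffle_rel:
  assumes "1 \<le> l"
  shows "(\<lambda>w. Pt l (Suc m) w - (Sg l (Suc m) w + Sg (Suc l) m w)) \<in> Rid"
proof -
  define u where "u = dl (zw [2*l+1])"
  define v where "v = dl (zw (twos (Suc m)))"
  have fu: "fsupp u" unfolding u_def by (rule hom_fsupp[OF hom_dl])
  have fv: "fsupp v" unfolding v_def by (rule hom_fsupp[OF hom_dl])
  have su: "\<forall>w. u w \<noteq> 0 \<longrightarrow> w = [] \<or> (\<exists>m. w = X0 # m @ [X1])"
  proof (intro allI impI)
    fix w assume "u w \<noteq> 0"
    then have "w = replicate (2*l) X0 @ [X1]" by (simp add: u_def zw_Cons)
    moreover have "replicate (2*l) X0 = X0 # replicate (2*l - 1) X0"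
      using assms by (cases "2*l") auto
    ultimately show "w = [] \<or> (\<exists>m. w = X0 # m @ [X1])" by auto
  qed
  have sv: "\<forall>w. v w \<noteq> 0 \<longrightarrow> w = [] \<or> (\<exists>m. w = m @ [X1])"
    using Z2_Suc_snoc by (auto simp: v_def)
  have "(\<lambda>w. shmul u v w - iota_poly (stmul (iota_inv u) (iota_inv v)) w) \<in> Rgens"
    unfolding Rgens_def using fu fv su sv by blast
  then have mem: "(\<lambda>w. shmul u v w - iota_poly (stmul (iota_inv u) (iota_inv v)) w) \<in> Rid"
    unfolding Rid_def by (rule shideal.gen)
  have iu: "iota_inv u = dl [2*l+1]" unfolding u_def by (rule iota_inv_dl) (simp add: pos_def)
  have iv: "iota_inv v = dl (twos (Suc m))" unfolding v_def by (rule iota_inv_dl) (simp add: pos_twos')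
  have sm: "stmul (iota_inv u) (iota_inv v) = st [2*l+1] (twos (Suc m))"
    unfolding iu iv by (rule stmul_dl) (auto simp: pos_def twos_def)
  have "iota_poly (stmul (iota_inv u) (iota_inv v)) w = Sg l (Suc m) w + Sg (Suc l) m w" for w
  proof -
    have "iota_poly (stmul (iota_inv u) (iota_inv v)) w =
      (\<Sum>i<Suc (Suc m). dl (zw (twos i @ [2*l+1] @ twos (Suc m - i))) w) +
      (\<Sum>i<Suc m. dl (zw (twos i @ [2*l+1 + 2] @ twos (Suc m - 1 - i))) w)"
      unfolding sm st_formula[of "2*l+1", OF zero_less_Suc[of "2*l", unfolded Suc_eq_plus1]] iota_poly_add
      by (subst iota_poly_sum, simp, force simp: pos_def twos_def)+ (rule refl)
    also have "\<dots> = Sg l (Suc m) w + Sg (Suc l) m w"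
      by (simp add: Sg_def)
    finally show ?thesis .
  qed
  moreover have "shmul u v = Pt l (Suc m)" by (simp add: u_def v_def Pt_def)
  ultimately show ?thesis using mem by simp
qed

lemma Sg_0: "Sg l 0 = Pt l 0"
  by (simp add: Sg_def Pt_def fun_eq_iff)

lemma tele:
  assumes "1 \<le> l"
  shows "(\<lambda>w. Sg l k w - (\<Sum>t<Suc k. (-1)^t * Pt (l+t) (k-t) w)) \<in> Rid"
  using assms
proof (induction k arbitrary: l)
  case 0
  have "(\<lambda>w. Sg l 0 w - (\<Sum>t<Suc 0. (-1)^t * Pt (l+t) (0-t) w)) = (\<lambda>_. 0)"
    by (simp add: Sg_0)
  then show ?case unfolding Rid_def by (simp add: shideal.zero)
next
  case (Suc k)
  have A: "(\<lambda>w. Pt l (Suc k) w - (Sg l (Suc k) w + Sg (Suc l) k w)) \<in> Rid"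
    using stuffle_rel Suc.prems by blast
  have B: "(\<lambda>w. Sg (Suc l) k w - (\<Sum>t<Suc k. (-1)^t * Pt (Suc l+t) (k-t) w)) \<in> Rid"
    using Suc.IH[of "Suc l"] Suc.prems by simp
  have "(\<lambda>w. (\<lambda>w. Pt l (Suc k) w - (Sg l (Suc k) w + Sg (Suc l) k w)) w + (\<lambda>w. Sg (Suc l) k w - (\<Sum>t<Suc k. (-1)^t * Pt (Suc l+t) (k-t) w)) w) \<in> Rid"
    using A B unfolding Rid_def by (rule shideal.add)
  then have C: "(\<lambda>w. (-1) * ((\<lambda>w. Pt l (Suc k) w - (Sg l (Suc k) w + Sg (Suc l) k w)) w + (\<lambda>w. Sg (Suc l) k w - (\<Sum>t<Suc k. (-1)^t * Pt (Suc l+t) (k-t) w)) w)) \<in> Rid"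
    unfolding Rid_def by (rule shideal.smul)
  have "(\<lambda>w. Sg l (Suc k) w - (\<Sum>t<Suc (Suc k). (-1)^t * Pt (l+t) (Suc k-t) w)) =
     (\<lambda>w. (-1) * ((\<lambda>w. Pt l (Suc k) w - (Sg l (Suc k) w + Sg (Suc l) k w)) w + (\<lambda>w. Sg (Suc l) k w - (\<Sum>t<Suc k. (-1)^t * Pt (Suc l+t) (k-t) w)) w))"
    by (simp only: sum.lessThan_Suc_shift[of _ "Suc k"]) (simp add: algebra_simps sum_negf)
  then show ?case using C by simp
qed

lemma Q_ident:
  assumes "1 \<le> r"
  shows "(\<lambda>w. dl (Qd r) w - 2 * (\<Sum>i = 1..r. (-1)^i * Pt i (r-i) w)) \<in> Rid"
proof -
  obtain k where k: "r = Suc k" using assms by (cases r) auto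
  have R: "shmul (dl (zw (twos r))) (dl [X0]) \<in> Rid"
    unfolding Rid_def
    by (rule shideal.mult) (auto simp: Rgens_def intro: shideal.gen hom_fsupp[OF hom_dl])
  have R': "shmul (dl (zw (twos r))) (dl [X0]) = (\<lambda>x. dl (Qd r) x + 2 * Sg 1 k x)"
    unfolding shmul_dl reg_formula by (simp add: Sg_def k Wd_def)
  have T: "(\<lambda>w. Sg 1 k w - (\<Sum>t<Suc k. (-1)^t * Pt (1+t) (k-t) w)) \<in> Rid"
    by (rule tele) simp
  have R2: "(\<lambda>x. dl (Qd r) x + 2 * Sg 1 k x) \<in> Rid" using R R' by simp
  have D: "(\<lambda>w. 2 * (\<lambda>w. Sg 1 k w - (\<Sum>t<Suc k. (-1)^t * Pt (1+t) (k-t) w)) w) \<in> Rid"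
    using T unfolding Rid_def by (rule shideal.smul)
  have "(\<lambda>w. (\<lambda>x. dl (Qd r) x + 2 * Sg 1 k x) w - (\<lambda>w. 2 * (\<lambda>w. Sg 1 k w - (\<Sum>t<Suc k. (-1)^t * Pt (1+t) (k-t) w)) w) w) \<in> Rid"
    using shideal_diff[OF R2[unfolded Rid_def] D[unfolded Rid_def]] unfolding Rid_def .
  moreover have "(\<Sum>i = 1..r. (-1)^i * Pt i (r-i) w) = - (\<Sum>t<Suc k. (-1)^t * Pt (1+t) (k-t) w)" for w
    unfolding k One_nat_def sum.atLeast1_atMost_eq by (simp add: sum_negf del: sum.lessThan_Suc)
  ultimately show ?thesis by (simp add: algebra_simps del: sum.lessThan_Suc)
qed


lemma zip_tl_Cons_Cons: "zip (x # y # L) (tl (x # y # L)) = (x, y) # zip (y # L) (tl (y # L))"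
  by simp

lemma adj_props:
  "sorted_wrt (<) (L :: nat list) \<Longrightarrow> (i, j) \<in> set (zip L (tl L)) \<Longrightarrow>
     i < j \<and> i \<in> set L \<and> j \<in> set L \<and> (\<forall>k\<in>set L. \<not> (i < k \<and> k < j))"
proof (induction L rule: induct_list012)
  case 1 then show ?case by simp
next
  case (2 x) then show ?case by simp
next
  case (3 x y L)
  have s: "sorted_wrt (<) (y # L)" "x < y" "\<forall>z\<in>set L. x < z \<and> y < z" using "3.prems"(1) by auto
  from "3.prems"(2) have "(i, j) = (x, y) \<or> (i, j) \<in> set (zip (y # L) (tl (y # L)))" by simp
  then show ?case
  proof
    assume "(i, j) = (x, y)"
    then show ?thesis using s by force
  next
    assume h: "(i, j) \<in> set (zip (y # L) (tl (y # L)))"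
    from "3.IH"(2)[OF s(1) h] have ih: "i < j \<and> i \<in> set (y # L) \<and> j \<in> set (y # L) \<and> (\<forall>k\<in>set (y # L). \<not> (i < k \<and> k < j))" .
    have "x < i" using ih s by auto
    then show ?thesis using ih by auto
  qed
qed

lemma cover:
  "sorted_wrt (<) (L :: nat list) \<Longrightarrow> L \<noteq> [] \<Longrightarrow> hd L < k \<Longrightarrow> k < last L \<Longrightarrow> k \<notin> set L \<Longrightarrow>
     \<exists>(i, j)\<in>set (zip L (tl L)). i < k \<and> k < j"
proof (induction L rule: induct_list012)
  case 1 then show ?case by simp
next
  case (2 x) then show ?case by simp
next
  case (3 x y L)
  show ?case
  proof (cases "k < y")
    case True
    then show ?thesis using "3.prems" by auto
  next
    case False
    then have "y < k" using "3.prems" by auto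
    moreover have "sorted_wrt (<) (y # L)" using "3.prems" by simp
    moreover have "k < last (y # L)" using "3.prems" by simp
    ultimately obtain i j where "(i, j) \<in> set (zip (y # L) (tl (y # L)))" "i < k" "k < j"
      using "3.IH"(2) "3.prems" by fastforce
    then show ?thesis by auto
  qed
qed

lemma distinct_adj: "sorted_wrt (<) (L :: nat list) \<Longrightarrow> distinct (zip L (tl L))"
  by (rule distinct_zipI1) (simp add: strict_sorted_iff)


definition okp :: "poly \<Rightarrow> bool" where "okp p \<longleftrightarrow> p = dl [] \<or> (\<exists>d>0. hom d p)"

definition prods :: "poly set" where
  "prods = {shmul p q | p q. fsupp p \<and> fsupp q \<and> p [] = 0 \<and> q [] = 0}"

lemma shprod_Nil[simp]: "shprod_list [] = dl []" by (simp add: shprod_list_def)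
lemma shprod_Cons[simp]: "shprod_list (p # ps) = shmul p (shprod_list ps)" by (simp add: shprod_list_def)

lemma shprod_units: "(\<forall>p\<in>set ps. p = dl []) \<Longrightarrow> shprod_list ps = dl []"
  by (induction ps) auto

lemma shprod_one: "(\<forall>q\<in>set xs \<union> set ys. q = dl []) \<Longrightarrow> shprod_list (xs @ p # ys) = p"
  by (induction xs) (auto simp: shprod_units)

lemma okp_cases: "okp p \<Longrightarrow> p [] = 0 \<Longrightarrow> \<exists>d>0. hom d p"
  by (auto simp: okp_def)
lemma okp_unit: "okp p \<Longrightarrow> p [] \<noteq> 0 \<Longrightarrow> p = dl []"
  by (auto simp: okp_def hom_Nil)

lemma shprod_hom: "(\<forall>p\<in>set ps. okp p) \<Longrightarrow> \<exists>d. hom d (shprod_list ps)"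
proof (induction ps)
  case Nil then show ?case using hom_dl[of "[]"] by auto
next
  case (Cons p ps)
  then obtain d where d: "hom d (shprod_list ps)" by auto
  have "okp p" using Cons by simp
  then obtain e where "hom e p" using hom_dl[of "[]"] unfolding okp_def by auto
  from hom_shmul[OF this d] show ?case by auto
qed

lemma shprod_pos: "(\<forall>p\<in>set ps. okp p) \<Longrightarrow> (\<exists>p\<in>set ps. p [] = 0) \<Longrightarrow> \<exists>d>0. hom d (shprod_list ps)"
proof (induction ps)
  case Nil then show ?case by simp
next
  case (Cons p ps)
  show ?case
  proof (cases "p [] = 0")
    case True
    then obtain d where d: "d > 0" "hom d p" using okp_cases Cons.prems by auto
    have "\<forall>p\<in>set ps. okp p" using Cons.prems by simp
    then obtain e where "hom e (shprod_list ps)" using shprod_hom by blast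
    from hom_shmul[OF d(2) this] d(1) show ?thesis by auto
  next
    case False
    then have "p = dl []" using okp_unit Cons.prems by auto
    moreover have "\<exists>d>0. hom d (shprod_list ps)"
      using Cons.IH Cons.prems False by simp
    ultimately show ?thesis by simp
  qed
qed

lemma shprod_prod:
  "(\<forall>p\<in>set ps. okp p) \<Longrightarrow> 2 \<le> length (filter (\<lambda>p. p [] = 0) ps) \<Longrightarrow> shprod_list ps \<in> qspan prods"
proof (induction ps)
  case Nil then show ?case by simp
next
  case (Cons p ps)
  show ?case
  proof (cases "p [] = 0")
    case True
    then obtain d where d: "d > 0" "hom d p" using okp_cases Cons.prems by auto
    have "1 \<le> length (filter (\<lambda>p. p [] = 0) ps)" using Cons.prems True by simp
    then have "filter (\<lambda>p. p [] = 0) ps \<noteq> []" by auto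
    then have "\<exists>p\<in>set ps. p [] = 0" by (simp add: filter_empty_conv)
    moreover have "\<forall>p\<in>set ps. okp p" using Cons.prems by simp
    ultimately obtain e where e: "e > 0" "hom e (shprod_list ps)" using shprod_pos by blast
    have "fsupp p" "fsupp (shprod_list ps)" "p [] = 0" "shprod_list ps [] = 0"
      using d e hom_fsupp hom_Nil by auto
    then have "shmul p (shprod_list ps) \<in> prods" unfolding prods_def by blast
    then show ?thesis by (simp add: qspan.base)
  next
    case False
    then have "p = dl []" using okp_unit Cons.prems by auto
    then show ?thesis using Cons.IH Cons.prems False by simp
  qed
qed

lemma hom_Iseg: "hom (length f) (Iseg c f d)"
  unfolding Iseg_def by (auto simp: hom_def dl_def)

lemma Lker_intro: "a \<in> RAid \<Longrightarrow> s \<in> qspan prods \<Longrightarrow> (\<lambda>w. a w + s w) \<in> Lker"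
  unfolding Lker_def prods_def by blast

lemma Lker_zero: "(\<lambda>_. 0) \<in> Lker"
  using Lker_intro[OF shideal.zero[of "Rgens \<union> {dl [X0, X1]}", folded RAid_def] qspan.zero[of prods]] by simp

lemma Lker_prods: "s \<in> qspan prods \<Longrightarrow> s \<in> Lker"
  using Lker_intro[OF shideal.zero[of "Rgens \<union> {dl [X0, X1]}", folded RAid_def], of s] by simp

lemma Lker_RAid: "s \<in> RAid \<Longrightarrow> s \<in> Lker"
  using Lker_intro[OF _ qspan.zero[of prods], of s] by simp

lemma piker_hom_ne: "hom d p \<Longrightarrow> d \<noteq> n \<Longrightarrow> p \<in> piker n"
  unfolding piker_def using hom_fsupp wcomp_hom_ne Lker_zero by auto

lemma piker_prod: "hom d p \<Longrightarrow> p \<in> qspan prods \<Longrightarrow> p \<in> piker n"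
proof (cases "d = n")
  case True
  assume "hom d p" "p \<in> qspan prods"
  then show ?thesis unfolding piker_def using True hom_fsupp wcomp_hom_eq Lker_prods by auto
next
  case False
  assume "hom d p" then show ?thesis using piker_hom_ne False by auto
qed

lemma tker_tens: "p \<in> piker n \<Longrightarrow> fsupp q \<Longrightarrow> tens p q \<in> tker n"
  unfolding tker_def by (rule qspan.base) blast

lemma tker_sum: "finite A \<Longrightarrow> (\<And>i. i \<in> A \<Longrightarrow> f i \<in> tker n) \<Longrightarrow> (\<lambda>x. \<Sum>i\<in>A. f i x) \<in> tker n"
  unfolding tker_def
proof (induction A rule: finite_induct)
  case empty then show ?case by (simp add: qspan.zero)
next
  case (insert a A)
  then have "(\<lambda>x. f a x + (\<lambda>x. \<Sum>i\<in>A. f i x) x) \<in> qspan ({tens p q | p q. p \<in> piker n \<and> fsupp q} \<union> {tens p q | p q. fsupp p \<and> q \<in> Rid})" by (intro qspan.add) auto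
  then show ?case using insert by simp
qed


lemma distinct_single: "distinct xs \<Longrightarrow> set xs = {a} \<Longrightarrow> xs = [a]"
proof -
  assume d: "distinct xs" and s: "set xs = {a}"
  have "length xs = 1" using distinct_card[OF d] s by simp
  then obtain y where "xs = [y]" by (auto simp: length_Suc_conv)
  then show ?thesis using s by simp
qed


definition bsl :: "nat \<Rightarrow> nat set \<Rightarrow> nat list" where
  "bsl n T = 0 # sorted_list_of_set T @ [n + 1]"
definition prs :: "nat \<Rightarrow> nat set \<Rightarrow> (nat \<times> nat) list" where
  "prs n T = zip (bsl n T) (tl (bsl n T))"
definition sg :: "word \<Rightarrow> nat \<times> nat \<Rightarrow> poly" where
  "sg e = (\<lambda>(i, j). Iseg (e ! i) (take (j - i - 1) (drop (i + 1) e)) (e ! j))"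

lemma gon_left_eq: "gon_left w T = shprod_list (map (sg (X1 # w @ [X0])) (prs (length w) T))"
  unfolding gon_left_def prs_def bsl_def sg_def Let_def by simp

lemma bsl_sorted:
  assumes "T \<subseteq> {1..n}"
  shows "sorted_wrt (<) (bsl n T)"
proof -
  have f: "finite T" using assms finite_subset by blast
  have "sorted_wrt (<) (sorted_list_of_set T)" by (rule strict_sorted_list_of_set)
  moreover have "\<forall>x\<in>set (sorted_list_of_set T). 0 < x \<and> x < n + 1" using assms f by auto
  ultimately show ?thesis unfolding bsl_def by (auto simp: sorted_wrt_append)
qed

lemma bsl_set: "T \<subseteq> {1..n} \<Longrightarrow> set (bsl n T) = insert 0 (insert (n+1) T)"
  unfolding bsl_def using finite_subset[of T "{1..n}"] by auto

lemma pair_props: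
  assumes "T \<subseteq> {1..n}" "(i, j) \<in> set (prs n T)"
  shows "i < j \<and> j \<le> n + 1 \<and> (i = 0 \<or> i \<in> T) \<and> (j = n + 1 \<or> j \<in> T) \<and> (\<forall>k\<in>T. \<not> (i < k \<and> k < j))"
proof -
  from adj_props[OF bsl_sorted[OF assms(1)] assms(2)[unfolded prs_def]]
  have h: "i < j" "i \<in> set (bsl n T)" "j \<in> set (bsl n T)" "\<forall>k\<in>set (bsl n T). \<not> (i < k \<and> k < j)" by auto
  then show ?thesis using bsl_set[OF assms(1)] assms(1) by auto
qed

lemma cover_prs:
  assumes "T \<subseteq> {1..n}" "k \<in> {1..n}" "k \<notin> T"
  shows "\<exists>(i, j)\<in>set (prs n T). i < k \<and> k < j"
  unfolding prs_def
  by (rule cover[OF bsl_sorted[OF assms(1)]]) (use assms bsl_set[OF assms(1)] in \<open>auto simp: bsl_def\<close>)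

lemma sg_props:
  assumes "T \<subseteq> {1..n}" "(i, j) \<in> set (prs n T)" "length e = n + 2"
  shows "okp (sg e (i, j))" "hom (j - i - 1) (sg e (i, j))"
    "sg e (i, j) [] = 0 \<longleftrightarrow> i + 1 < j"
proof -
  have p: "i < j" "j \<le> n + 1" using pair_props[OF assms(1,2)] by auto
  have l: "length (take (j - i - 1) (drop (i + 1) e)) = j - i - 1" using p assms(3) by simp
  have h0: "hom (length (take (j - i - 1) (drop (i + 1) e))) (Iseg (e ! i) (take (j - i - 1) (drop (i + 1) e)) (e ! j))"
    by (rule hom_Iseg)
  show h: "hom (j - i - 1) (sg e (i, j))" unfolding sg_def using h0[unfolded l] by simp
  show "okp (sg e (i, j))"
  proof (cases "i + 1 < j")
    case True then show ?thesis using h unfolding okp_def by (intro disjI2 exI[of _ "j - i - 1"]) simp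
  next
    case False
    then have "j - i - 1 = 0" by simp
    then show ?thesis unfolding okp_def sg_def by (simp add: Iseg_Nil)
  qed
  show "sg e (i, j) [] = 0 \<longleftrightarrow> i + 1 < j"
  proof (cases "i + 1 < j")
    case True then show ?thesis using hom_Nil[OF h] by simp
  next
    case False
    then have "j - i - 1 = 0" by simp
    then show ?thesis using False unfolding sg_def by (simp add: Iseg_Nil)
  qed
qed

lemma sg_unit:
  assumes "T \<subseteq> {1..n}" "x \<in> set (prs n T)" "\<not> (fst x + 1 < snd x)"
  shows "sg e x = dl []"
proof -
  obtain i j where x: "x = (i, j)" by (cases x)
  then have "i < j" using pair_props[OF assms(1)] assms(2) by auto
  then have "j - i - 1 = 0" using assms(3) x by simp
  then show ?thesis unfolding sg_def x by (simp add: Iseg_Nil)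
qed

lemma filter_map_sg:
  assumes "T \<subseteq> {1..n}" "length e = n + 2"
  shows "filter (\<lambda>p. p [] = 0) (map (sg e) (prs n T)) = map (sg e) (filter (\<lambda>x. fst x + 1 < snd x) (prs n T))"
proof -
  have "filter (\<lambda>p. p [] = 0) (map (sg e) (prs n T)) = map (sg e) (filter ((\<lambda>p. p [] = 0) \<circ> sg e) (prs n T))"
    by (simp add: filter_map)
  also have "filter ((\<lambda>p. p [] = 0) \<circ> sg e) (prs n T) = filter (\<lambda>x. fst x + 1 < snd x) (prs n T)"
    by (rule filter_cong) (use sg_props(3)[OF assms(1) _ assms(2)] in auto)
  finally show ?thesis .
qed

lemma single_block:
  assumes "T \<subseteq> {1..n}" "filter (\<lambda>x. fst x + 1 < snd x) (prs n T) = [x]"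
  shows "shprod_list (map (sg e) (prs n T)) = sg e x"
proof -
  obtain us vs where d: "prs n T = us @ x # vs" "\<forall>u\<in>set us. \<not> (fst u + 1 < snd u)" "[] = filter (\<lambda>x. fst x + 1 < snd x) vs"
    using assms(2) unfolding filter_eq_Cons_iff by blast
  have v: "\<forall>u\<in>set vs. \<not> (fst u + 1 < snd u)" using d(3) by (metis empty_filter_conv)
  have "\<forall>q\<in>set (map (sg e) us) \<union> set (map (sg e) vs). q = dl []"
    using d(1,2) v sg_unit[OF assms(1)] by (auto simp: d(1))
  then show ?thesis unfolding d(1) by (simp add: shprod_one)
qed

lemma classify:
  assumes "T \<subseteq> {1..n}" "T \<noteq> {1..n}" "length e = n + 2"
    "\<And>i. i + m \<le> n \<Longrightarrow> T \<noteq> {1..n} - {i+1..i+m}"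
  shows "shprod_list (map (sg e) (prs n T)) \<in> piker m"
proof -
  let ?F = "filter (\<lambda>x. fst x + 1 < snd x) (prs n T)"
  have okall: "\<forall>p\<in>set (map (sg e) (prs n T)). okp p"
    using sg_props(1)[OF assms(1) _ assms(3)] by auto
  obtain d where hd: "hom d (shprod_list (map (sg e) (prs n T)))" using shprod_hom[OF okall] by blast
  consider (z) "?F = []" | (o) x where "?F = [x]" | (t) x y zs where "?F = x # y # zs"
    by (metis list.exhaust)
  then show ?thesis
  proof cases
    case z
    obtain k where k: "k \<in> {1..n}" "k \<notin> T" using assms(1,2) by blast
    obtain i j where ij: "(i, j) \<in> set (prs n T)" "i < k" "k < j" using cover_prs[OF assms(1) k] by blast
    then have "(i, j) \<in> set ?F" by simp
    with z show ?thesis by simp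
  next
    case (o x)
    obtain i j where x: "x = (i, j)" by (cases x)
    have "x \<in> set ?F" using o by simp
    then have xin: "(i, j) \<in> set (prs n T)" and P: "i + 1 < j" using x by auto
    have pp: "i < j \<and> j \<le> n + 1 \<and> (i = 0 \<or> i \<in> T) \<and> (j = n + 1 \<or> j \<in> T) \<and> (\<forall>k\<in>T. \<not> (i < k \<and> k < j))"
      using pair_props[OF assms(1) xin] .
    have eq: "shprod_list (map (sg e) (prs n T)) = sg e (i, j)" using single_block[OF assms(1) o] x by simp
    have hx: "hom (j - i - 1) (sg e (i, j))" using sg_props(2)[OF assms(1) xin assms(3)] .
    show ?thesis
    proof (cases "j - i - 1 = m")
      case False then show ?thesis unfolding eq using piker_hom_ne[OF hx] by simp
    next
      case True
      have "T = {1..n} - {i+1..i+m}"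
      proof (rule set_eqI)
        fix k
        show "k \<in> T \<longleftrightarrow> k \<in> {1..n} - {i+1..i+m}"
        proof
          assume "k \<in> T" then show "k \<in> {1..n} - {i+1..i+m}" using pp True assms(1) by auto
        next
          assume kk: "k \<in> {1..n} - {i+1..i+m}"
          show "k \<in> T"
          proof (rule ccontr)
            assume "k \<notin> T"
            then obtain i' j' where ij: "(i', j') \<in> set (prs n T)" "i' < k" "k < j'"
              using cover_prs[OF assms(1)] kk by blast
            then have "(i', j') \<in> set ?F" by simp
            then have "(i', j') \<in> set [x]" unfolding o .
            then have "(i', j') = (i, j)" using x by simp
            then show False using ij kk True by auto
          qed
        qed
      qed
      moreover have "i + m \<le> n" using pp True by auto
      ultimately show ?thesis using assms(4) by blast
    qed
  next
    case (t x y zs)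
    have "2 \<le> length (filter (\<lambda>p. p [] = 0) (map (sg e) (prs n T)))"
      unfolding filter_map_sg[OF assms(1,3)] using t by simp
    from shprod_prod[OF okall this] show ?thesis using piker_prod[OF hd] by blast
  qed
qed

lemma block_filter:
  assumes "i + m \<le> n" "1 \<le> m"
  shows "filter (\<lambda>x. fst x + 1 < snd x) (prs n ({1..n} - {i+1..i+m})) = [(i, i+m+1)]"
proof -
  let ?T = "{1..n} - {i+1..i+m}"
  let ?F = "filter (\<lambda>x. fst x + 1 < snd x) (prs n ?T)"
  have T: "?T \<subseteq> {1..n}" by auto
  have all: "x = (i, i+m+1)" if "x \<in> set ?F" for x
  proof -
    obtain i' j' where x: "x = (i', j')" by (cases x)
    have xin: "(i', j') \<in> set (prs n ?T)" and P: "i' + 1 < j'" using that unfolding x by simp_all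
    note pp = pair_props[OF T xin]
    have p1: "i' < j'" "j' \<le> n + 1" using pp by simp_all
    have p2: "i' = 0 \<or> i' \<in> ?T" using pp by blast
    have p3: "j' = n + 1 \<or> j' \<in> ?T" using pp by blast
    have p4: "\<And>k. k \<in> ?T \<Longrightarrow> \<not> (i' < k \<and> k < j')" using pp by blast
    have nT: "i' + 1 \<notin> ?T" using p4[of "i'+1"] P by auto
    have "1 \<le> i' + 1" "i' + 1 \<le> n" using p1 P by linarith+
    then have k: "i + 1 \<le> i' + 1" "i' + 1 \<le> i + m" using nT by auto
    have ii: "i' = i"
    proof (cases "i' = 0")
      case True then show ?thesis using k by simp
    next
      case False
      then have "i' \<in> ?T" using p2 by simp
      then have "\<not> (i + 1 \<le> i' \<and> i' \<le> i + m)" by simp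
      then show ?thesis using k by simp
    qed
    have jj: "j' = i + m + 1"
    proof -
      have "j' \<ge> i + m + 1"
      proof (cases "j' = n + 1")
        case True then show ?thesis using assms by simp
      next
        case False
        then have "j' \<in> ?T" using p3 by simp
        then have "\<not> (i + 1 \<le> j' \<and> j' \<le> i + m)" by simp
        moreover have "i + 1 < j'" using P ii by simp
        ultimately show ?thesis by simp
      qed
      moreover have "j' \<le> i + m + 1"
      proof (rule ccontr)
        assume a: "\<not> j' \<le> i + m + 1"
        then have "i + m + 1 \<le> n" using p1 by linarith
        then have "i + m + 1 \<in> ?T" by simp
        from p4[OF this] show False using ii a by simp
      qed
      ultimately show ?thesis by simp
    qed
    show ?thesis using x ii jj by simp
  qed
  have ex: "(i, i+m+1) \<in> set ?F"
  proof -
    have k1: "i + 1 \<in> {1..n}" "i + 1 \<notin> ?T" using assms by auto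
    obtain i' j' where ij: "(i', j') \<in> set (prs n ?T)" "i' < i + 1" "i + 1 < j'"
      using cover_prs[OF T k1] by blast
    then have "(i', j') \<in> set ?F" by simp
    from all[OF this] have "(i', j') = (i, i+m+1)" .
    with \<open>(i', j') \<in> set ?F\<close> show ?thesis by simp
  qed
  have dist: "distinct ?F" unfolding prs_def by (rule distinct_filter, rule distinct_adj, rule bsl_sorted[OF T])
  have "set ?F = {(i, i+m+1)}" using all ex by blast
  then show ?thesis by (rule distinct_single[OF dist])
qed


lemma len_w: "length (zw (twos a @ [3] @ twos b)) = 2*a+2*b+3"
  unfolding W_map by simp

lemma sl_full: "sorted_list_of_set {1..n} = [1..<n+1]"
proof -
  have "{1..n} = {1..<n+1}" by auto
  then show ?thesis by simp
qed

lemma sl_block: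
  assumes "i + m \<le> n"
  shows "sorted_list_of_set ({1..n} - {i+1..i+m}) = [1..<i+1] @ [i+m+1..<n+1]"
proof -
  let ?l = "[1..<i+1] @ [i+m+1..<n+1]"
  have s: "sorted_wrt (<) ?l" by (auto simp: sorted_wrt_append)
  have st: "set ?l = {1..n} - {i+1..i+m}" using assms by auto
  have d: "distinct ?l" using strict_sorted_iff s by blast
  have "length ?l = card (set ?l)" by (rule distinct_card[OF d, symmetric])
  then have "sorted_wrt (<) ?l \<and> set ?l = {1..n} - {i+1..i+m} \<and> length ?l = card ({1..n} - {i+1..i+m})"
    using s st by simp
  then show ?thesis using sorted_list_of_set_unique[of "{1..n} - {i+1..i+m}" ?l] by simp
qed

lemma gon_right_full:
  "gon_right w {1..length w} = w"
  unfolding gon_right_def sl_full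
proof (rule nth_equalityI)
  show "length (map ((!) (X1 # w @ [X0])) [1..<length w + 1]) = length w" by (simp only: length_map length_upt)
next
  fix k assume "k < length (map ((!) (X1 # w @ [X0])) [1..<length w + 1])"
  then have k: "k < length w" by (simp only: length_map length_upt)
  then show "map ((!) (X1 # w @ [X0])) [1..<length w + 1] ! k = w ! k"
    by (simp add: nth_append del: upt_Suc)
qed

lemma gon_left_full:
  "gon_left w {1..length w} = dl []"
proof -
  let ?n = "length w" and ?e = "X1 # w @ [X0]"
  have T: "{1..?n} \<subseteq> {1..?n}" by simp
  have "\<forall>p\<in>set (map (sg ?e) (prs ?n {1..?n})). p = dl []"
  proof
    fix p assume "p \<in> set (map (sg ?e) (prs ?n {1..?n}))"
    then obtain x where x: "x \<in> set (prs ?n {1..?n})" "p = sg ?e x" unfolding set_map by blast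
    obtain i j where ij: "x = (i, j)" by (cases x)
    have pp: "i < j \<and> j \<le> ?n + 1 \<and> (i = 0 \<or> i \<in> {1..?n}) \<and> (j = ?n + 1 \<or> j \<in> {1..?n}) \<and> (\<forall>k\<in>{1..?n}. \<not> (i < k \<and> k < j))"
      using pair_props[OF T x(1)[unfolded ij]] .
    have "\<not> (i + 1 < j)"
    proof
      assume "i + 1 < j"
      have jn: "j \<le> ?n + 1" and p4: "\<forall>k\<in>{1..?n}. \<not> (i < k \<and> k < j)" using pp by simp_all
      have k: "i + 1 \<in> {1..?n}" using jn \<open>i + 1 < j\<close> by simp
      have "\<not> (i < i + 1 \<and> i + 1 < j)" using bspec[OF p4 k] .
      then show False using \<open>i + 1 < j\<close> by simp
    qed
    then show "p = dl []" using sg_unit[OF T x(1)] x(2) ij by simp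
  qed
  then show ?thesis unfolding gon_left_eq by (rule shprod_units)
qed

context
  fixes a b r :: nat
  assumes r1: "1 \<le> r" and r2: "r \<le> a + b"
begin

abbreviation "ww \<equiv> zw (twos a @ [3] @ twos b)"
abbreviation "ee \<equiv> X1 # ww @ [X0]"

definition Bk :: "nat \<Rightarrow> nat set" where "Bk i = {1..2*a+2*b+3} - {i+1..i+(2*r+1)}"

lemma e_len': "length ee = (2*a+2*b+3) + 2" using e_len by simp

lemma gl_B:
  assumes "i \<in> {0..2*a+2*b+2-2*r}"
  shows "gon_left ww (Bk i) = hI a r i"
proof -
  have im: "i + (2*r+1) \<le> 2*a+2*b+3" using assms r2 by auto
  have "gon_left ww (Bk i) = shprod_list (map (sg ee) (prs (2*a+2*b+3) (Bk i)))"
    unfolding gon_left_eq len_w ..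
  also have "\<dots> = sg ee (i, i + (2*r+1) + 1)"
    unfolding Bk_def by (rule single_block[OF _ block_filter[OF im]]) auto
  also have "\<dots> = hI a r i"
  proof -
    have e1: "ee ! i = Ea a i" by (rule e_nth) (use im in simp)
    have e2: "ee ! (i + 2*r + 2) = Ea a (i + 2*r + 2)" by (rule e_nth) (use im in simp)
    have c1: "i + (2*r+1) + 1 = i + 2*r + 2" by simp
    have c2: "i + 2*r + 2 - i - 1 = 2*r+1" by simp
    show ?thesis unfolding sg_def prod.case c1 c2 e1 e2 block_eq[OF im] hI_def ..
  qed
  finally show ?thesis .
qed

lemma hI_nz_ends:
  assumes "hI a r i \<noteq> (\<lambda>_. 0)"
  shows "i \<le> 2*a+1" "2*a+2 \<le> i + 2*r + 2"
proof -
  have "Ea a i \<noteq> Ea a (i+2*r+2)"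
  proof
    assume "Ea a i = Ea a (i+2*r+2)"
    then have "hI a r i = (\<lambda>_. 0)" unfolding hI_def by (simp add: Iseg_same)
    with assms show False by simp
  qed
  then have "(i \<le> 2*a+1) \<noteq> (i+2*r+2 \<le> 2*a+1)" unfolding Ea_def if_letter_eq by presburger
  then show "i \<le> 2*a+1" "2*a+2 \<le> i + 2*r + 2" by auto
qed

lemma gr_B:
  assumes "i \<in> {0..2*a+2*b+2-2*r}" "hI a r i \<noteq> (\<lambda>_. 0)"
  shows "gon_right ww (Bk i) = zw (twos (a+b+1-r))"
proof -
  have im: "i + (2*r+1) \<le> 2*a+2*b+3" using assms r2 by auto
  note ends = hI_nz_ends[OF assms(2)]
  let ?l = "[1..<i+1] @ [i+(2*r+1)+1..<2*a+2*b+3+1]"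
  have "gon_right ww (Bk i) = map ((!) ee) ?l"
    unfolding gon_right_def Bk_def sl_block[OF im] ..
  also have "\<dots> = zw (twos (a+b+1-r))"
  proof (rule nth_equalityI)
    show "length (map ((!) ee) ?l) = length (zw (twos (a+b+1-r)))"
      using im r2 by (simp only: length_map length_append length_upt len_Z2; simp)
  next
    fix k assume "k < length (map ((!) ee) ?l)"
    then have k: "k < 2*(a+b+1-r)" using im r2 by (simp only: length_map length_append length_upt; simp)
    show "map ((!) ee) ?l ! k = zw (twos (a+b+1-r)) ! k"
    proof (cases "k < i")
      case True
      have "map ((!) ee) ?l ! k = ee ! (k+1)" using True by (simp add: nth_append del: upt_Suc)
      also have "\<dots> = Ea a (k+1)" by (rule e_nth) (use True im in simp)
      finally show ?thesis using True ends k unfolding Z2_map by (simp add: Ea_def alt_def)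
    next
      case False
      have "map ((!) ee) ?l ! k = ee ! (k+2*r+2)" using False k im by (simp add: nth_append algebra_simps del: upt_Suc)
      also have "\<dots> = Ea a (k+2*r+2)" by (rule e_nth) (use False k im r2 in simp)
      finally show ?thesis using False ends k unfolding Z2_map by (simp add: Ea_def alt_def)
    qed
  qed
  finally show ?thesis .
qed

lemma Bk_inj: "inj_on Bk {0..2*a+2*b+2-2*r}"
proof
  fix i j assume i: "i \<in> {0..2*a+2*b+2-2*r}" and j: "j \<in> {0..2*a+2*b+2-2*r}" and e: "Bk i = Bk j"
  have "i + 1 \<notin> Bk i" "j + 1 \<notin> Bk j" by (simp_all add: Bk_def)
  moreover have "i + 1 \<in> {1..2*a+2*b+3}" "j + 1 \<in> {1..2*a+2*b+3}" using i j r2 by auto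
  ultimately have "i + 1 \<notin> Bk j" "j + 1 \<notin> Bk i" "i + 1 \<in> {1..2*a+2*b+3}" "j + 1 \<in> {1..2*a+2*b+3}"
    using e by simp_all
  then have "i + 1 \<in> {j+1..j+(2*r+1)}" "j + 1 \<in> {i+1..i+(2*r+1)}" unfolding Bk_def by blast+
  then show "i = j" by simp
qed

lemma Bk_ne: "i \<in> {0..2*a+2*b+2-2*r} \<Longrightarrow> Bk i \<noteq> {1..2*a+2*b+3}"
proof -
  assume i: "i \<in> {0..2*a+2*b+2-2*r}"
  have "i + 1 \<notin> Bk i" by (simp add: Bk_def)
  moreover have "i + 1 \<in> {1..2*a+2*b+3}" using i r2 by auto
  ultimately show ?thesis by blast
qed

lemma Bk_sub: "Bk i \<in> Pow {1..2*a+2*b+3}" by (auto simp: Bk_def)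

lemma rest_piker:
  assumes "T \<in> Pow {1..2*a+2*b+3}" "T \<noteq> {1..2*a+2*b+3}" "T \<notin> Bk ` {0..2*a+2*b+2-2*r}"
  shows "gon_left ww T \<in> piker (2*r+1)"
proof -
  have T: "T \<subseteq> {1..2*a+2*b+3}" using assms(1) by simp
  have "shprod_list (map (sg ee) (prs (2*a+2*b+3) T)) \<in> piker (2*r+1)"
  proof (rule classify[OF T assms(2)])
    show "length ee = 2*a+2*b+3 + 2" by (rule e_len')
    fix i assume "i + (2*r+1) \<le> 2*a+2*b+3"
    then have "i \<in> {0..2*a+2*b+2-2*r}" by auto
    then show "T \<noteq> {1..2*a+2*b+3} - {i+1..i+(2*r+1)}" using assms(3) unfolding Bk_def by blast
  qed
  then show ?thesis unfolding gon_left_eq len_w .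
qed

definition cc :: rat where "cc = (if a \<ge> r then 1 else 0) - (if b \<ge> r then 1 else 0)"

lemma D_eq:
  "(\<lambda>u. (\<Sum>i\<in>{0..2*a+2*b+2-2*r}. hI a r i u) - xi a b r u) =
   (\<lambda>u. cc * (dl (Qd r) u - 2 * (\<Sum>i = 1..r. (-1)^i * Pt i (r-i) u)))"
proof
  fix u
  show "(\<Sum>i\<in>{0..2*a+2*b+2-2*r}. hI a r i u) - xi a b r u = cc * (dl (Qd r) u - 2 * (\<Sum>i = 1..r. (-1)^i * Pt i (r-i) u))"
    unfolding sum_hI[OF r1 r2] xi_def Pt_def cc_def by (simp add: algebra_simps)
qed

lemma D_piker:
  "(\<lambda>u. (\<Sum>i\<in>{0..2*a+2*b+2-2*r}. hI a r i u) - xi a b r u) \<in> piker (2*r+1)"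
proof -
  let ?D = "(\<lambda>u. cc * (dl (Qd r) u - 2 * (\<Sum>i = 1..r. (-1)^i * Pt i (r-i) u)))"
  have rid: "?D \<in> Rid" using Q_ident[OF r1] unfolding Rid_def by (rule shideal.smul)
  have hP: "hom (2*r+1) (\<lambda>u. (-1)^i * Pt i (r-i) u)" if "i \<in> {1..r}" for i
  proof -
    have "hom (length (zw [2*i+1]) + length (zw (twos (r-i)))) (Pt i (r-i))"
      unfolding Pt_def by (rule hom_shmul[OF hom_dl hom_dl])
    moreover have "length (zw [2*i+1]) + length (zw (twos (r-i))) = 2*r+1"
      using that by (simp add: zw_Cons; linarith)
    ultimately show ?thesis by (intro hom_smul) simp
  qed
  have lq: "length (Qd r) = 2*r+1" unfolding Qd_def by simp
  have hD: "hom (2*r+1) ?D"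
    by (intro hom_smul hom_diff) (use hom_dl[of "Qd r"] lq in simp, intro hom_smul hom_sum hP)
  have "?D \<in> piker (2*r+1)"
    unfolding piker_def using hom_fsupp[OF hD] wcomp_hom_eq[OF hD] Lker_RAid[OF Rid_RAid[OF rid]] by simp
  then show ?thesis unfolding D_eq .
qed

lemma term_Bk:
  assumes "i \<in> {0..2*a+2*b+2-2*r}"
  shows "tens (gon_left ww (Bk i)) (dl (gon_right ww (Bk i))) = tens (hI a r i) (dl (zw (twos (a+b+1-r))))"
proof (cases "hI a r i = (\<lambda>_. 0)")
  case True then show ?thesis unfolding gl_B[OF assms] by (simp add: tens_def)
next
  case False show ?thesis unfolding gl_B[OF assms] gr_B[OF assms False] by (rule refl)
qed

theorem main:
  "eqLZ (2 * r + 1) (gon_red ww) (tens (xi a b r) (dl (zw (twos (a + b + 1 - r)))))"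
proof -
  let ?n = "2*a+2*b+3"
  let ?I = "{0..2*a+2*b+2-2*r}"
  let ?Z = "zw (twos (a + b + 1 - r))"
  let ?F = "{1..?n}"
  let ?R = "Pow ?F - insert ?F (Bk ` ?I)"
  let ?t = "\<lambda>T. tens (gon_left ww T) (dl (gon_right ww T))"
  let ?D = "\<lambda>u. (\<Sum>i\<in>?I. hI a r i u) - xi a b r u"
  have gon_sum: "gon ww x = (\<Sum>T\<in>Pow ?F. ?t T x)" for x
  proof -
    obtain u v where x: "x = (u, v)" by (cases x)
    have "gon ww (u, v) = (\<Sum>T\<in>Pow ?F. gon_left ww T u * (if v = gon_right ww T then 1 else 0))"
      unfolding gon_def len_w by simp
    also have "\<dots> = (\<Sum>T\<in>Pow ?F. ?t T (u, v))"
      by (rule sum.cong) (simp_all add: tens_def dl_def)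
    finally show ?thesis using x by simp
  qed
  have split: "Pow ?F = insert ?F (Bk ` ?I \<union> ?R)"
  proof (rule equalityI)
    show "Pow ?F \<subseteq> insert ?F (Bk ` ?I \<union> ?R)" by blast
    have "Bk ` ?I \<subseteq> Pow ?F" using Bk_sub by blast
    then show "insert ?F (Bk ` ?I \<union> ?R) \<subseteq> Pow ?F" by blast
  qed
  have fin: "finite (Bk ` ?I)" "finite ?R" by simp_all
  have "?F \<notin> Bk ` ?I"
  proof
    assume "?F \<in> Bk ` ?I"
    then obtain i where "i \<in> ?I" "?F = Bk i" by blast
    with Bk_ne show False by metis
  qed
  then have disj1: "?F \<notin> Bk ` ?I \<union> ?R" by blast
  have disj2: "Bk ` ?I \<inter> ?R = {}" by blast
  have full: "?t ?F = tens (dl []) (dl ww)"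
  proof -
    have "gon_left ww ?F = dl []" using gon_left_full[of ww] unfolding len_w .
    moreover have "gon_right ww ?F = ww" using gon_right_full[of ww] unfolding len_w .
    ultimately show ?thesis by (simp only:)
  qed
  have s1: "(\<Sum>T\<in>Pow ?F. ?t T x) = ?t ?F x + ((\<Sum>T\<in>Bk ` ?I. ?t T x) + (\<Sum>T\<in>?R. ?t T x))" for x
  proof -
    have "(\<Sum>T\<in>Pow ?F. ?t T x) = (\<Sum>T\<in>insert ?F (Bk ` ?I \<union> ?R). ?t T x)"
      by (rule arg_cong[where f = "\<lambda>S. \<Sum>T\<in>S. ?t T x", OF split])
    also have "\<dots> = ?t ?F x + (\<Sum>T\<in>Bk ` ?I \<union> ?R. ?t T x)"
      by (rule sum.insert) (use fin disj1 in simp_all)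
    also have "(\<Sum>T\<in>Bk ` ?I \<union> ?R. ?t T x) = (\<Sum>T\<in>Bk ` ?I. ?t T x) + (\<Sum>T\<in>?R. ?t T x)"
      by (rule sum.union_disjoint[OF fin disj2])
    finally show ?thesis .
  qed
  have s2: "(\<Sum>T\<in>Bk ` ?I. ?t T x) = (\<Sum>i\<in>?I. tens (hI a r i) (dl ?Z) x)" for x
  proof -
    have "(\<Sum>T\<in>Bk ` ?I. ?t T x) = (\<Sum>i\<in>?I. ?t (Bk i) x)"
      by (rule sum.reindex[OF Bk_inj, unfolded comp_def])
    also have "\<dots> = (\<Sum>i\<in>?I. tens (hI a r i) (dl ?Z) x)"
    proof (rule sum.cong[OF refl])
      fix i assume "i \<in> ?I"
      show "?t (Bk i) x = tens (hI a r i) (dl ?Z) x" unfolding term_Bk[OF \<open>i \<in> ?I\<close>] ..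
    qed
    finally show ?thesis .
  qed
  have s3: "(\<Sum>i\<in>?I. tens (hI a r i) (dl ?Z) x) - tens (xi a b r) (dl ?Z) x = tens ?D (dl ?Z) x" for x
  proof -
    obtain u v where x: "x = (u, v)" by (cases x)
    show ?thesis unfolding x tens_def by (simp add: sum_distrib_right left_diff_distrib)
  qed
  have eq: "(\<lambda>x. gon_red ww x - tens (xi a b r) (dl ?Z) x) =
      (\<lambda>x. (\<lambda>x. \<Sum>T\<in>?R. ?t T x) x + tens ?D (dl ?Z) x)"
  proof
    fix x
    have "gon_red ww x = (\<Sum>i\<in>?I. tens (hI a r i) (dl ?Z) x) + (\<Sum>T\<in>?R. ?t T x)"
      unfolding gon_red_def gon_sum s1 s2 full by simp
    then show "gon_red ww x - tens (xi a b r) (dl ?Z) x = (\<lambda>x. \<Sum>T\<in>?R. ?t T x) x + tens ?D (dl ?Z) x"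
      using s3[of x] by simp
  qed
  have A: "(\<lambda>x. \<Sum>T\<in>?R. ?t T x) \<in> tker (2*r+1)"
  proof (rule tker_sum)
    show "finite ?R" by simp
    fix T assume T: "T \<in> ?R"
    then have "gon_left ww T \<in> piker (2*r+1)" using rest_piker by blast
    then show "?t T \<in> tker (2*r+1)" by (rule tker_tens) (rule hom_fsupp[OF hom_dl])
  qed
  have B: "tens ?D (dl ?Z) \<in> tker (2*r+1)"
    by (rule tker_tens[OF D_piker hom_fsupp[OF hom_dl]])
  have "(\<lambda>x. (\<lambda>x. \<Sum>T\<in>?R. ?t T x) x + tens ?D (dl ?Z) x) \<in> tker (2*r+1)"
    using A B unfolding tker_def by (rule qspan.add)
  then show ?thesis unfolding eqLZ_def eq .
qed
end



theorem mainTheorem18: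
  fixes a b r :: nat
  assumes "1 \<le> r" and "r \<le> a + b"
  shows "eqLZ (2 * r + 1) (gon_red (zw (twos a @ [3] @ twos b)))
           (tens (xi a b r) (dl (zw (twos (a + b + 1 - r)))))"
  using main[OF assms] .

end
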